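(* Let $t\in\mathbf{Z}$, $m\in\mathbf{N}\cup\{\infty\}$, and $q>1$ a power of $p$. For every $\underline{\mathcal{L}_m}$-algebra $k$, the Frobenius operator $F:W^{(t)}_{m,q}(k)\to W^{(t+1)}_{m,q}(k)$, $(\alpha_0,\alpha_1,\dots)\mapsto(\alpha_0^q,\alpha_1^q,\dots)$, is a ring homomorphism, and it is natural in $k$; that is, it defines a morphism of ring schemes $W^{(t)}_{m,q}\to W^{(t+1)}_{m,q}$ over $\underline{\mathcal{L}_m}$.
   Context: Fix a prime $p$. $\mathcal{L}^{(t)}_{m,q}:=\mathbf{Z}[\omega_i^{q^{-\infty}}\mid1\le i\le m][[\pi]]/(p-\sum_{i=1}^m\omega_i^{q^t}\pi^i,\pi^{m+1})$ (with $\pi^{\infty+1}:=0$) and $\underline{\mathcal{L}_m}:=\mathbf{F}_p[\omega_i\mid1\le i\le m]^{\mathrm{pf}}$. Arithmetic polynomials $Q^{\ast(t)}_{i,q}$ ($\ast\in\{+,\times\}$) are the unique elements of $\underline{\mathcal{L}_\infty}[X_i^{p^{-\infty}},Y_i^{p^{-\infty}}]$ with $\sum_iX_i^{q^{-i}}\pi^i\ast\sum_iY_i^{q^{-i}}\pi^i=\sum_i[Q^{\ast(t)}_{i,q}(X,Y)^{q^{-i}}]\pi^i$ in the $\pi$-adic completion of $\mathcal{L}^{(t)}_{\infty,q}[X_i^{p^{-\infty}},Y_i^{p^{-\infty}}]$, $[-]$ being the multiplicative section from the perfect residue ring; $Q^{\ast(t)}_{n,q}$ is a polynomial in $X_0..X_n,Y_0..Y_n$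 with coefficients in $\mathbf{F}_p[\omega_1^{q^t},\dots,\omega_n^{q^t}]\subset\underline{\mathcal{L}_m}$ for $n\le m$. For an $\underline{\mathcal{L}_m}$-algebra $k$, $W^{(t)}_{m,q}(k)$ is the ring $k^{m+1}$ (tuples indexed by $0\le i\le m$) with $(a+b)_n=Q^{+(t)}_{n,q}(a,b)$ and $(ab)_n=Q^{\times(t)}_{n,q}(a,b)$, functorial coordinatewise. *)

theory Defs
  imports "HOL-Library.Poly_Mapping" "HOL-Computational_Algebra.Polynomial" "HOL-Library.Extended_Nat"
begin

text \<open>Variables: omega_i (i >= 1 used), X_i, Y_i (i >= 0).\<close>
datatype var = Om nat | Xv nat | Yv nat

text \<open>Monomials with nonnegative rational exponents; the big ring
  R = Z[omega^(p^-inf), X^(p^-inf), Y^(p^-inf)] (only exponents in Z[1/p]_{>=0} are used).\<close>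
type_synonym mon = "var \<Rightarrow>\<^sub>0 rat"
type_synonym R = "mon \<Rightarrow>\<^sub>0 int"

definition padic_exp :: "nat \<Rightarrow> rat \<Rightarrow> bool" where
  "padic_exp p e \<longleftrightarrow> 0 \<le> e \<and> (\<exists>k::nat. e * of_nat p ^ k \<in> \<int>)"

definition term_R :: "mon \<Rightarrow> R" where
  "term_R \<mu> = Poly_Mapping.single \<mu> 1"

text \<open>Canonical representatives (coefficients in {0..p-1}) of elements of
  L_m = F_p[omega_1..omega_m]^pf  (m = \<infinity> allowed).\<close>
definition Lm_elem :: "nat \<Rightarrow> enat \<Rightarrow> R \<Rightarrow> bool" where
  "Lm_elem p m a \<longleftrightarrow>
     (\<forall>(\<mu>::mon)\<in>Poly_Mapping.keys a. 0 \<le> Poly_Mapping.lookup a \<mu> \<and> Poly_Mapping.lookup a \<mu> < int p \<and>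
        (\<forall>(v::var)\<in>Poly_Mapping.keys \<mu>. (\<exists>i. v = Om i \<and> 1 \<le> i \<and> enat i \<le> m) \<and> padic_exp p (Poly_Mapping.lookup \<mu> v)))"

text \<open>Canonical representatives of elements of L_infty[X_i^(p^-inf), Y_i^(p^-inf)].\<close>
definition LXY_elem :: "nat \<Rightarrow> R \<Rightarrow> bool" where
  "LXY_elem p a \<longleftrightarrow>
     (\<forall>(\<mu>::mon)\<in>Poly_Mapping.keys a. 0 \<le> Poly_Mapping.lookup a \<mu> \<and> Poly_Mapping.lookup a \<mu> < int p \<and>
        (\<forall>(v::var)\<in>Poly_Mapping.keys \<mu>. (\<forall>i. v = Om i \<longrightarrow> 1 \<le> i) \<and> padic_exp p (Poly_Mapping.lookup \<mu> v)))"

text \<open>Reduction of coefficients mod p (ring operations of the perfect F_p-algebras on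
  canonical representatives).\<close>
definition modp :: "nat \<Rightarrow> R \<Rightarrow> R" where
  "modp p a = Poly_Mapping.map (\<lambda>c. c mod int p) a"

text \<open>s-th root in the perfect F_p-algebra (s a power of p), lifted to R with the same
  coefficients: divide all exponents by s.\<close>
definition rootR :: "nat \<Rightarrow> R \<Rightarrow> R" where
  "rootR s a = (\<Sum>\<mu>\<in>Poly_Mapping.keys a. Poly_Mapping.single (Poly_Mapping.map (\<lambda>e. e / of_nat s) \<mu>) (Poly_Mapping.lookup a \<mu>))"

text \<open>Teichmueller lift [a] modulo pi^(n+1): (any lift of a^(p^-n))^(p^n).\<close>
definition teich :: "nat \<Rightarrow> nat \<Rightarrow> R \<Rightarrow> R" where
  "teich p n a = (rootR (p ^ n) a) ^ (p ^ n)"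

text \<open>p - sum_{i=1}^{n} omega_i^(q^t) pi^i  (the relation of L^(t)_{infty,q}, modulo pi^(n+1)).\<close>
definition frel :: "nat \<Rightarrow> nat \<Rightarrow> int \<Rightarrow> nat \<Rightarrow> R poly" where
  "frel p q t n = [:of_nat p:] -
     (\<Sum>i\<in>{1..n}. monom (term_R (Poly_Mapping.single (Om i) ((of_nat q :: rat) powi t))) i)"

text \<open>Congruence modulo the ideal (relation, pi^(n+1)) of R[pi]; the family of these
  congruences for all n is equality in the pi-adic completion.\<close>
definition cong_pi :: "nat \<Rightarrow> nat \<Rightarrow> int \<Rightarrow> nat \<Rightarrow> R poly \<Rightarrow> R poly \<Rightarrow> bool" where
  "cong_pi p q t n A B \<longleftrightarrow> (\<exists>g h. A - B = frel p q t n * g + monom 1 (Suc n) * h)"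

definition xser :: "nat \<Rightarrow> (nat \<Rightarrow> var) \<Rightarrow> nat \<Rightarrow> R poly" where
  "xser q V n = (\<Sum>i\<le>n. monom (term_R (Poly_Mapping.single (V i) (1 / (of_nat q) ^ i))) i)"

text \<open>Defining property of the arithmetic polynomials Q^{*(t)}_{i,q}, * given by op.\<close>
definition Qprop :: "nat \<Rightarrow> nat \<Rightarrow> int \<Rightarrow> (R poly \<Rightarrow> R poly \<Rightarrow> R poly) \<Rightarrow> (nat \<Rightarrow> R) \<Rightarrow> bool" where
  "Qprop p q t op Q \<longleftrightarrow> (\<forall>i. LXY_elem p (Q i)) \<and>
     (\<forall>n. cong_pi p q t n (op (xser q Xv n) (xser q Yv n))
            (\<Sum>i\<le>n. monom (teich p n (rootR (q ^ i) (Q i))) i))"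

definition Qadd :: "nat \<Rightarrow> nat \<Rightarrow> int \<Rightarrow> nat \<Rightarrow> R" where
  "Qadd p q t = (THE Q. Qprop p q t (+) Q)"

definition Qmul :: "nat \<Rightarrow> nat \<Rightarrow> int \<Rightarrow> nat \<Rightarrow> R" where
  "Qmul p q t = (THE Q. Qprop p q t (*) Q)"

text \<open>Structure of an L_m-algebra: a ring homomorphism from L_m (on canonical reps).\<close>
definition Lm_alg :: "nat \<Rightarrow> enat \<Rightarrow> (R \<Rightarrow> 'k::comm_ring_1) \<Rightarrow> bool" where
  "Lm_alg p m \<phi> \<longleftrightarrow> \<phi> 1 = 1 \<and>
     (\<forall>a b. Lm_elem p m a \<longrightarrow> Lm_elem p m b \<longrightarrow>
        \<phi> (modp p (a + b)) = \<phi> a + \<phi> b \<and> \<phi> (modp p (a * b)) = \<phi> a * \<phi> b)"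

definition omega_part :: "mon \<Rightarrow> mon" where
  "omega_part \<mu> = (\<Sum>v\<in>{v\<in>Poly_Mapping.keys \<mu>. \<exists>i. v = Om i}. Poly_Mapping.single v (Poly_Mapping.lookup \<mu> v))"

text \<open>Evaluation of Q (a polynomial in X_i, Y_i with coefficients in L_m) at tuples a, b of k.\<close>
definition evalQ :: "(R \<Rightarrow> 'k::comm_ring_1) \<Rightarrow> R \<Rightarrow> (nat \<Rightarrow> 'k) \<Rightarrow> (nat \<Rightarrow> 'k) \<Rightarrow> 'k" where
  "evalQ \<phi> Q a b = (\<Sum>\<mu>\<in>Poly_Mapping.keys Q. \<phi> (Poly_Mapping.single (omega_part \<mu>) (Poly_Mapping.lookup Q \<mu>)) *
      (\<Prod>v\<in>Poly_Mapping.keys \<mu>. (case v of Xv j \<Rightarrow> a j ^ nat \<lfloor>Poly_Mapping.lookup \<mu> v\<rfloor>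
                              | Yv j \<Rightarrow> b j ^ nat \<lfloor>Poly_Mapping.lookup \<mu> v\<rfloor>
                              | Om _ \<Rightarrow> 1)))"

text \<open>Ring operations of W^(t)_{m,q}(k) (coordinates n <= m are the relevant ones).\<close>
definition W_add :: "nat \<Rightarrow> nat \<Rightarrow> int \<Rightarrow> (R \<Rightarrow> 'k::comm_ring_1) \<Rightarrow> (nat \<Rightarrow> 'k) \<Rightarrow> (nat \<Rightarrow> 'k) \<Rightarrow> nat \<Rightarrow> 'k" where
  "W_add p q t \<phi> a b = (\<lambda>n. evalQ \<phi> (Qadd p q t n) a b)"

definition W_mul :: "nat \<Rightarrow> nat \<Rightarrow> int \<Rightarrow> (R \<Rightarrow> 'k::comm_ring_1) \<Rightarrow> (nat \<Rightarrow> 'k) \<Rightarrow> (nat \<Rightarrow> 'k) \<Rightarrow> nat \<Rightarrow> 'k" where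
  "W_mul p q t \<phi> a b = (\<lambda>n. evalQ \<phi> (Qmul p q t n) a b)"

definition W_zero :: "nat \<Rightarrow> 'k::comm_ring_1" where
  "W_zero = (\<lambda>n. 0)"

definition W_one :: "nat \<Rightarrow> 'k::comm_ring_1" where
  "W_one = (\<lambda>n. if n = 0 then 1 else 0)"

definition Frob :: "nat \<Rightarrow> (nat \<Rightarrow> 'k::comm_ring_1) \<Rightarrow> nat \<Rightarrow> 'k" where
  "Frob q a = (\<lambda>i. a i ^ q)"

end

theory Submission
  imports Defs
begin

lemma binom_p:
  fixes x y :: "'a::comm_ring_1"
  assumes p: "prime p"
  shows "\<exists>w. (x + y) ^ p = x ^ p + y ^ p + of_nat p * y * w"
proof -
  have p1: "p > 1" using p prime_gt_1_nat by blast
  define w where "w = (\<Sum>k\<in>{1..<p}. of_nat ((p choose k) div p) * y ^ (k - 1) * x ^ (p - k) :: 'a)"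
  have "(x + y) ^ p = (y + x) ^ p" by (simp add: add.commute)
  also have "\<dots> = (\<Sum>k\<le>p. of_nat (p choose k) * y ^ k * x ^ (p - k))"
    by (rule binomial_ring)
  also have "{..p} = insert 0 (insert p {1..<p})" using p1 by auto
  also have "(\<Sum>k\<in>insert 0 (insert p {1..<p}). of_nat (p choose k) * y ^ k * x ^ (p - k))
     = x ^ p + (y ^ p + (\<Sum>k\<in>{1..<p}. of_nat (p choose k) * y ^ k * x ^ (p - k)))"
    using p1 by (simp add: sum.insert)
  also have "(\<Sum>k\<in>{1..<p}. of_nat (p choose k) * y ^ k * x ^ (p - k)) = of_nat p * y * w"
    unfolding w_def sum_distrib_left
  proof (rule sum.cong[OF refl])
    fix k assume k: "k \<in> {1..<p}"
    have "p dvd (p choose k)" using dvd_choose_prime[of k p] k p by auto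
    then have c: "(p choose k) = p * ((p choose k) div p)" by simp
    have yk: "y ^ k = y * y ^ (k - 1)" using k by (cases k) auto
    show "of_nat (p choose k) * y ^ k * x ^ (p - k) =
          of_nat p * y * (of_nat ((p choose k) div p) * y ^ (k - 1) * x ^ (p - k))"
      by (subst c, subst yk) (simp add: algebra_simps)
  qed
  finally show ?thesis by (auto simp: algebra_simps)
qed

lemma pow_dvd_diff:
  fixes x y :: "'a::comm_ring_1"
  shows "(x - y) dvd (x ^ n - y ^ n)"
  by (metis power_diff_sumr2 dvd_triv_left)

lemma pow_cong:
  fixes x y c :: "'a::comm_ring_1"
  assumes "c dvd (x - y)"
  shows "c dvd (x ^ n - y ^ n)"
  using assms pow_dvd_diff dvd_trans by blast

lemma frob_add:
  fixes x y :: "'a::comm_ring_1"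
  assumes "prime p"
  shows "of_nat p dvd ((x + y) ^ p - (x ^ p + y ^ p))"
proof -
  obtain w where "(x + y) ^ p = x ^ p + y ^ p + of_nat p * y * w" using binom_p[OF assms] by blast
  then show ?thesis by (simp add: mult.assoc)
qed

lemma frob_sum:
  fixes f :: "'b \<Rightarrow> 'a::comm_ring_1"
  assumes p: "prime p" and "finite S"
  shows "of_nat p dvd ((\<Sum>i\<in>S. f i) ^ p - (\<Sum>i\<in>S. f i ^ p))"
  using assms(2)
proof (induction S rule: finite_induct)
  case empty
  then show ?case using p by (simp add: zero_power prime_gt_0_nat)
next
  case (insert a S)
  have "(\<Sum>i\<in>insert a S. f i) ^ p - (\<Sum>i\<in>insert a S. f i ^ p)
    = ((f a + (\<Sum>i\<in>S. f i)) ^ p - (f a ^ p + (\<Sum>i\<in>S. f i) ^ p))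
      + ((\<Sum>i\<in>S. f i) ^ p - (\<Sum>i\<in>S. f i ^ p))"
    using insert by (simp add: sum.insert)
  then show ?case using frob_add[OF p, of "f a" "(\<Sum>i\<in>S. f i)"] insert.IH
    by (metis dvd_add)
qed

lemma frob_sum_pow:
  fixes f :: "'b \<Rightarrow> 'a::comm_ring_1"
  assumes p: "prime p" and "finite S"
  shows "of_nat p dvd ((\<Sum>i\<in>S. f i) ^ (p ^ k) - (\<Sum>i\<in>S. f i ^ (p ^ k)))"
proof (induction k)
  case 0
  then show ?case by simp
next
  case (Suc k)
  have a: "of_nat p dvd (((\<Sum>i\<in>S. f i) ^ (p ^ k)) ^ p - (\<Sum>i\<in>S. f i ^ (p ^ k)) ^ p)"
    by (rule pow_cong[OF Suc])
  have b: "of_nat p dvd ((\<Sum>i\<in>S. f i ^ (p ^ k)) ^ p - (\<Sum>i\<in>S. (f i ^ (p ^ k)) ^ p))"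
    by (rule frob_sum[OF p assms(2)])
  have "(\<Sum>i\<in>S. f i) ^ (p ^ Suc k) - (\<Sum>i\<in>S. f i ^ (p ^ Suc k)) =
     (((\<Sum>i\<in>S. f i) ^ (p ^ k)) ^ p - (\<Sum>i\<in>S. f i ^ (p ^ k)) ^ p)
     + ((\<Sum>i\<in>S. f i ^ (p ^ k)) ^ p - (\<Sum>i\<in>S. (f i ^ (p ^ k)) ^ p))"
    by (simp add: power_mult[symmetric] mult.commute)
  then show ?case using a b by (metis dvd_add)
qed

lemma fermat_nat_int:
  assumes p: "prime p"
  shows "int p dvd (int n ^ p - int n)"
proof (induction n)
  case 0
  then show ?case using p by (simp add: zero_power prime_gt_0_nat)
next
  case (Suc n)
  obtain w where w: "(int n + 1) ^ p = int n ^ p + 1 ^ p + of_nat p * 1 * w"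
    using binom_p[OF p, of "int n" 1] by blast
  have "int (Suc n) ^ p - int (Suc n) = (int n ^ p - int n) + int p * w"
    using w by (simp add: add.commute)
  then show ?case using Suc by (metis dvd_add dvd_triv_left)
qed

lemma fermat_int:
  fixes c :: int
  assumes p: "prime p"
  shows "int p dvd (c ^ p - c)"
proof -
  have pp: "int p > 0" using p prime_gt_0_nat by simp
  define d where "d = c mod int p"
  have d0: "d \<ge> 0" using pp d_def by simp
  have cd: "int p dvd (c - d)" unfolding d_def by (simp add: mod_eq_dvd_iff)
  have a: "int p dvd (c ^ p - d ^ p)" by (rule pow_cong[OF cd])
  have b: "int p dvd (d ^ p - d)" using fermat_nat_int[OF p, of "nat d"] d0 by simp
  have "c ^ p - c = (c ^ p - d ^ p) + (d ^ p - d) - (c - d)" by simp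
  then show ?thesis using a b cd by (metis dvd_add dvd_diff)
qed

lemma fermat_int_pow:
  fixes c :: int
  assumes p: "prime p"
  shows "int p dvd (c ^ (p ^ k) - c)"
proof (induction k)
  case 0
  then show ?case by simp
next
  case (Suc k)
  have a: "int p dvd ((c ^ (p ^ k)) ^ p - c ^ p)" by (rule pow_cong[OF Suc])
  have "c ^ (p ^ Suc k) - c = ((c ^ (p ^ k)) ^ p - c ^ p) + (c ^ p - c)"
    by (simp add: power_mult[symmetric] mult.commute)
  then show ?case using a fermat_int[OF p, of c] by (metis dvd_add)
qed

definition Rmap :: "(mon \<Rightarrow> mon) \<Rightarrow> R \<Rightarrow> R" where
  "Rmap g x = (\<Sum>\<mu>\<in>Poly_Mapping.keys x. Poly_Mapping.single (g \<mu>) (Poly_Mapping.lookup x \<mu>))"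

lemma lookup_sum_single:
  assumes "finite K"
  shows "Poly_Mapping.lookup (\<Sum>\<mu>\<in>K. Poly_Mapping.single (g \<mu>) (f \<mu>)) \<nu>
       = (\<Sum>\<mu>\<in>K. if g \<mu> = \<nu> then f \<mu> else (0::'b::comm_monoid_add))"
  using assms by (induction K rule: finite_induct) (auto simp: lookup_add lookup_single)

lemma Rmap_superset:
  assumes "finite K" "Poly_Mapping.keys x \<subseteq> K"
  shows "Rmap g x = (\<Sum>\<mu>\<in>K. Poly_Mapping.single (g \<mu>) (Poly_Mapping.lookup x \<mu>))"
  unfolding Rmap_def
  by (rule sum.mono_neutral_left) (use assms in \<open>auto simp: in_keys_iff\<close>)

lemma Rmap_add: "Rmap g (x + y) = Rmap g x + Rmap g y"
proof -
  define K where "K = Poly_Mapping.keys x \<union> Poly_Mapping.keys y"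
  have fK: "finite K" unfolding K_def by simp
  have "Poly_Mapping.keys (x + y) \<subseteq> K" unfolding K_def by (rule keys_add)
  then show ?thesis
    using Rmap_superset[OF fK, of x g] Rmap_superset[OF fK, of y g] Rmap_superset[OF fK, of "x+y" g]
    by (simp add: K_def lookup_add single_add sum.distrib)
qed

lemma Rmap_zero [simp]: "Rmap g 0 = 0"
  by (simp add: Rmap_def)

lemma Rmap_single [simp]: "Rmap g (Poly_Mapping.single \<mu> c) = Poly_Mapping.single (g \<mu>) c"
  by (cases "c = 0") (auto simp: Rmap_def)

lemma Rmap_uminus: "Rmap g (- x) = - Rmap g x"
  by (metis Rmap_add Rmap_zero add_eq_0_iff)

lemma Rmap_diff: "Rmap g (x - y) = Rmap g x - Rmap g y"
  by (metis Rmap_add Rmap_uminus diff_conv_add_uminus)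

lemma Rmap_sum: "Rmap g (\<Sum>i\<in>S. f i) = (\<Sum>i\<in>S. Rmap g (f i))"
  by (induction S rule: infinite_finite_induct) (auto simp: Rmap_add)

lemma R_expansion: "(\<Sum>\<mu>\<in>Poly_Mapping.keys x. Poly_Mapping.single \<mu> (Poly_Mapping.lookup x \<mu>)) = x"
proof (rule poly_mapping_eqI)
  fix \<nu>
  show "Poly_Mapping.lookup (\<Sum>\<mu>\<in>Poly_Mapping.keys x. Poly_Mapping.single \<mu> (Poly_Mapping.lookup x \<mu>)) \<nu>
      = Poly_Mapping.lookup x \<nu>"
    by (subst lookup_sum_single[where g="\<lambda>\<mu>. \<mu>"]) (auto simp: in_keys_iff)
qed

lemma Rmap_id: "Rmap (\<lambda>\<mu>. \<mu>) x = x"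
  unfolding Rmap_def by (rule R_expansion)

lemma Rmap_comp: "Rmap f (Rmap g x) = Rmap (f \<circ> g) x"
  by (simp add: Rmap_def[of g] Rmap_sum) (simp add: Rmap_def)

lemma R_mult_expansion:
  "(x::R) * y = (\<Sum>\<mu>\<in>Poly_Mapping.keys x. \<Sum>\<nu>\<in>Poly_Mapping.keys y.
       Poly_Mapping.single (\<mu> + \<nu>) (Poly_Mapping.lookup x \<mu> * Poly_Mapping.lookup y \<nu>))"
proof -
  have "x * y = (\<Sum>\<mu>\<in>Poly_Mapping.keys x. Poly_Mapping.single \<mu> (Poly_Mapping.lookup x \<mu>))
       * (\<Sum>\<nu>\<in>Poly_Mapping.keys y. Poly_Mapping.single \<nu> (Poly_Mapping.lookup y \<nu>))"
    by (simp add: R_expansion)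
  also have "\<dots> = (\<Sum>\<mu>\<in>Poly_Mapping.keys x. \<Sum>\<nu>\<in>Poly_Mapping.keys y.
       Poly_Mapping.single (\<mu> + \<nu>) (Poly_Mapping.lookup x \<mu> * Poly_Mapping.lookup y \<nu>))"
    by (simp add: sum_product mult_single)
  finally show ?thesis .
qed

lemma Rmap_mult:
  assumes add: "\<And>a b. g (a + b) = g a + g b"
  shows "Rmap g (x * y) = Rmap g x * Rmap g y"
proof -
  have "Rmap g (x * y) = (\<Sum>\<mu>\<in>Poly_Mapping.keys x. \<Sum>\<nu>\<in>Poly_Mapping.keys y.
       Poly_Mapping.single (g \<mu> + g \<nu>) (Poly_Mapping.lookup x \<mu> * Poly_Mapping.lookup y \<nu>))"
    by (subst R_mult_expansion) (simp add: Rmap_sum add)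
  also have "\<dots> = Rmap g x * Rmap g y"
    by (simp add: Rmap_def sum_product mult_single)
  finally show ?thesis .
qed

lemma Rmap_one:
  assumes "g 0 = 0"
  shows "Rmap g 1 = 1"
  using Rmap_single[of g 0 1] assms by (simp flip: single_one)

lemma Rmap_power:
  assumes add: "\<And>a b. g (a + b) = g a + g b" and "g 0 = 0"
  shows "Rmap g (x ^ n) = (Rmap g x) ^ n"
  by (induction n) (simp_all add: Rmap_one[of g, OF assms(2)] Rmap_mult[OF add])

lemma Rmap_of_int:
  assumes "g 0 = 0"
  shows "Rmap g (of_int c) = of_int c"
  using Rmap_single[of g 0 c] assms by (simp flip: single_of_int)

lemma Rmap_of_nat:
  assumes "g 0 = 0"
  shows "Rmap g (of_nat c) = of_nat c"
  using Rmap_single[of g 0 "of_nat c"] assms by (simp flip: single_of_nat)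

lemma lookup_Rmap_inj:
  assumes "inj g"
  shows "Poly_Mapping.lookup (Rmap g x) (g \<mu>) = Poly_Mapping.lookup x \<mu>"
proof -
  have "Poly_Mapping.lookup (Rmap g x) (g \<mu>) =
     (\<Sum>\<nu>\<in>Poly_Mapping.keys x. if g \<nu> = g \<mu> then Poly_Mapping.lookup x \<nu> else 0)"
    unfolding Rmap_def by (rule lookup_sum_single) simp
  also have "\<dots> = (\<Sum>\<nu>\<in>Poly_Mapping.keys x. if \<nu> = \<mu> then Poly_Mapping.lookup x \<nu> else 0)"
    using assms by (intro sum.cong) (auto dest: injD)
  also have "\<dots> = Poly_Mapping.lookup x \<mu>"
    by (auto simp: in_keys_iff)
  finally show ?thesis .
qed

lemma lookup_Rmap_notin:
  assumes "\<nu> \<notin> g ` Poly_Mapping.keys x"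
  shows "Poly_Mapping.lookup (Rmap g x) \<nu> = 0"
proof -
  have "Poly_Mapping.lookup (Rmap g x) \<nu> =
     (\<Sum>\<mu>\<in>Poly_Mapping.keys x. if g \<mu> = \<nu> then Poly_Mapping.lookup x \<mu> else 0)"
    unfolding Rmap_def by (rule lookup_sum_single) simp
  also have "\<dots> = 0" using assms by (intro sum.neutral) auto
  finally show ?thesis .
qed

lemma keys_Rmap_inj:
  assumes "inj g"
  shows "Poly_Mapping.keys (Rmap g x) = g ` Poly_Mapping.keys x"
proof
  show "Poly_Mapping.keys (Rmap g x) \<subseteq> g ` Poly_Mapping.keys x"
    using lookup_Rmap_notin by (auto simp: in_keys_iff) (metis image_iff in_keys_iff)
  show "g ` Poly_Mapping.keys x \<subseteq> Poly_Mapping.keys (Rmap g x)"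
    using lookup_Rmap_inj[OF assms] by (auto simp: in_keys_iff)
qed

lemma keys_Rmap_sub: "Poly_Mapping.keys (Rmap g x) \<subseteq> g ` Poly_Mapping.keys x"
  using lookup_Rmap_notin by (auto simp: in_keys_iff) (metis image_iff in_keys_iff)

lemma lookup_map0:
  assumes "f 0 = 0"
  shows "Poly_Mapping.lookup (Poly_Mapping.map f p) k = f (Poly_Mapping.lookup p k)"
  using assms by (simp add: Poly_Mapping.map.rep_eq when_def)

definition mscale :: "nat \<Rightarrow> mon \<Rightarrow> mon" where
  "mscale k \<mu> = Poly_Mapping.map (\<lambda>e. of_nat k * e) \<mu>"

definition divs :: "nat \<Rightarrow> mon \<Rightarrow> mon" where
  "divs s \<mu> = Poly_Mapping.map (\<lambda>e. e / of_nat s) \<mu>"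

lemma lookup_mscale [simp]: "Poly_Mapping.lookup (mscale k \<mu>) v = of_nat k * Poly_Mapping.lookup \<mu> v"
  unfolding mscale_def by (simp add: lookup_map0)

lemma lookup_divs [simp]: "Poly_Mapping.lookup (divs k \<mu>) v = Poly_Mapping.lookup \<mu> v / of_nat k"
  unfolding divs_def by (simp add: lookup_map0)

lemma mscale_add: "mscale k (a + b) = mscale k a + mscale k b"
  by (rule poly_mapping_eqI) (simp add: lookup_add algebra_simps)

lemma divs_add: "divs k (a + b) = divs k a + divs k b"
  by (rule poly_mapping_eqI) (simp add: lookup_add add_divide_distrib)

lemma mscale_0 [simp]: "mscale k 0 = 0"
  by (rule poly_mapping_eqI) simp

lemma divs_0 [simp]: "divs k 0 = 0"
  by (rule poly_mapping_eqI) simp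

lemma rootR_Rmap: "rootR s = Rmap (divs s)"
  by (rule ext) (simp add: rootR_def Rmap_def divs_def)

lemma single_pow: "(Poly_Mapping.single \<mu> (c::int) :: R) ^ k = Poly_Mapping.single (mscale k \<mu>) (c ^ k)"
proof (induction k)
  case 0
  have "mscale 0 \<mu> = 0" by (rule poly_mapping_eqI) simp
  then show ?case by simp
next
  case (Suc k)
  have "\<mu> + mscale k \<mu> = mscale (Suc k) \<mu>" by (rule poly_mapping_eqI) (simp add: lookup_add algebra_simps)
  then show ?case using Suc by (simp add: mult_single)
qed

lemma of_nat_mult_R: "(of_nat n :: R) * z = Poly_Mapping.map (\<lambda>c. int n * c) z"
  by (simp add: mult_map_scale_conv_mult flip: single_of_nat)

lemma lookup_of_nat_mult: "Poly_Mapping.lookup ((of_nat n :: R) * z) \<mu> = int n * Poly_Mapping.lookup z \<mu>"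
  by (simp add: of_nat_mult_R lookup_map0)

lemma dvdR_lookup:
  assumes "(of_nat p :: R) dvd x"
  shows "int p dvd Poly_Mapping.lookup x \<mu>"
  using assms by (auto simp: lookup_of_nat_mult)

lemma dvdR_witness:
  assumes "\<And>\<mu>. int p dvd Poly_Mapping.lookup x \<mu>"
  shows "x = (of_nat p :: R) * Poly_Mapping.map (\<lambda>c. c div int p) x"
  by (rule poly_mapping_eqI) (simp add: lookup_of_nat_mult lookup_map0 assms)

lemma single_times_p: "Poly_Mapping.single \<mu> (int p * d) = (of_nat p :: R) * Poly_Mapping.single \<mu> d"
  by (simp add: mult_single flip: single_of_nat)

lemma diff3: "(a::'a::ab_group_add) - c = (a - b) + (b - c)" by simp

lemma FrobR:
  assumes p: "prime p"
  shows "(of_nat p :: R) dvd (x ^ (p ^ k) - Rmap (mscale (p ^ k)) x)"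
proof -
  let ?K = "Poly_Mapping.keys x"
  let ?c = "Poly_Mapping.lookup x"
  have a: "(of_nat p :: R) dvd ((\<Sum>\<mu>\<in>?K. Poly_Mapping.single \<mu> (?c \<mu>)) ^ (p ^ k)
       - (\<Sum>\<mu>\<in>?K. Poly_Mapping.single \<mu> (?c \<mu>) ^ (p ^ k)))"
    by (rule frob_sum_pow[OF p]) simp
  have b: "(\<Sum>\<mu>\<in>?K. Poly_Mapping.single \<mu> (?c \<mu>) ^ (p ^ k)) - Rmap (mscale (p ^ k)) x
     = (of_nat p :: R) * (\<Sum>\<mu>\<in>?K. Poly_Mapping.single (mscale (p^k) \<mu>) ((?c \<mu> ^ (p ^ k) - ?c \<mu>) div int p))"
  proof -
    have "(\<Sum>\<mu>\<in>?K. Poly_Mapping.single \<mu> (?c \<mu>) ^ (p ^ k)) - Rmap (mscale (p ^ k)) x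
      = (\<Sum>\<mu>\<in>?K. Poly_Mapping.single (mscale (p^k) \<mu>) (?c \<mu> ^ (p ^ k) - ?c \<mu>))"
      unfolding Rmap_def single_pow sum_subtractf[symmetric] single_diff by (rule refl)
    also have "\<dots> = (\<Sum>\<mu>\<in>?K. (of_nat p :: R) * Poly_Mapping.single (mscale (p^k) \<mu>) ((?c \<mu> ^ (p ^ k) - ?c \<mu>) div int p))"
    proof (rule sum.cong[OF refl])
      fix \<mu>
      have "int p dvd (?c \<mu> ^ (p ^ k) - ?c \<mu>)" by (rule fermat_int_pow[OF p])
      then have "?c \<mu> ^ (p ^ k) - ?c \<mu> = int p * ((?c \<mu> ^ (p ^ k) - ?c \<mu>) div int p)" by simp
      then have "Poly_Mapping.single (mscale (p^k) \<mu>) (?c \<mu> ^ (p ^ k) - ?c \<mu>)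
          = Poly_Mapping.single (mscale (p^k) \<mu>) (int p * ((?c \<mu> ^ (p ^ k) - ?c \<mu>) div int p))"
        by (rule arg_cong)
      also have "\<dots> = (of_nat p :: R) * Poly_Mapping.single (mscale (p^k) \<mu>) ((?c \<mu> ^ (p ^ k) - ?c \<mu>) div int p)"
        by (rule single_times_p)
      finally show "Poly_Mapping.single (mscale (p^k) \<mu>) (?c \<mu> ^ (p ^ k) - ?c \<mu>)
          = (of_nat p :: R) * Poly_Mapping.single (mscale (p^k) \<mu>) ((?c \<mu> ^ (p ^ k) - ?c \<mu>) div int p)" .
    qed
    finally show ?thesis by (simp only: sum_distrib_left)
  qed
  have a': "(of_nat p :: R) dvd (x ^ (p ^ k) - (\<Sum>\<mu>\<in>?K. Poly_Mapping.single \<mu> (?c \<mu>) ^ (p ^ k)))"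
    using a by (simp only: R_expansion)
  have b': "(of_nat p :: R) dvd ((\<Sum>\<mu>\<in>?K. Poly_Mapping.single \<mu> (?c \<mu>) ^ (p ^ k)) - Rmap (mscale (p ^ k)) x)"
    by (subst b) (rule dvd_triv_left)
  show ?thesis
    by (subst diff3[where b="(\<Sum>\<mu>\<in>?K. Poly_Mapping.single \<mu> (?c \<mu>) ^ (p ^ k))"]) (rule dvd_add[OF a' b'])
qed

lemma mscale_divs: "s > 0 \<Longrightarrow> mscale s \<circ> divs s = (\<lambda>\<mu>. \<mu>)"
  by (rule ext, rule poly_mapping_eqI) simp

lemma divs_mscale: "s > 0 \<Longrightarrow> divs s \<circ> mscale s = (\<lambda>\<mu>. \<mu>)"
  by (rule ext, rule poly_mapping_eqI) simp

lemma teich_cong: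
  assumes p: "prime p"
  shows "(of_nat p :: R) dvd (teich p n a - a)"
proof -
  have pp: "p ^ n > 0" using p prime_gt_0_nat by simp
  have "Rmap (mscale (p ^ n)) (rootR (p ^ n) a) = a"
    by (simp add: rootR_Rmap Rmap_comp mscale_divs[OF pp] Rmap_id)
  then show ?thesis using FrobR[OF p, of "rootR (p ^ n) a" n] by (simp add: teich_def)
qed

lemma teich_step:
  assumes p: "prime p"
  shows "(of_nat p :: R) dvd ((rootR (p ^ Suc n) a) ^ p - rootR (p ^ n) a)"
proof -
  have pp: "p > 0" using p prime_gt_0_nat by simp
  have e: "of_nat p * (e / of_nat (p ^ Suc n)) = e / of_nat (p ^ n)" for e :: rat
    using pp by (simp add: field_simps)
  have "mscale p \<circ> divs (p ^ Suc n) = divs (p ^ n)"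
  proof (rule ext, rule poly_mapping_eqI)
    fix \<mu> v
    show "Poly_Mapping.lookup ((mscale p \<circ> divs (p ^ Suc n)) \<mu>) v = Poly_Mapping.lookup (divs (p ^ n) \<mu>) v"
      by (simp only: o_def lookup_mscale lookup_divs e)
  qed
  then have "Rmap (mscale p) (rootR (p ^ Suc n) a) = rootR (p ^ n) a"
    by (simp add: rootR_Rmap Rmap_comp)
  then show ?thesis using FrobR[OF p, of "rootR (p ^ Suc n) a" 1] by simp
qed

definition canon :: "nat \<Rightarrow> R \<Rightarrow> bool" where
  "canon p x \<longleftrightarrow> (\<forall>\<mu>. 0 \<le> Poly_Mapping.lookup x \<mu> \<and> Poly_Mapping.lookup x \<mu> < int p)"

lemma int_dvd_small:
  fixes a b :: int
  assumes "int p dvd (a - b)" "0 \<le> a" "a < int p" "0 \<le> b" "b < int p"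
  shows "a = b"
proof (rule ccontr)
  assume "a \<noteq> b"
  then have "\<bar>int p\<bar> \<le> \<bar>a - b\<bar>" using dvd_imp_le_int[of "a - b" "int p"] assms(1) by simp
  then show False using assms(2-5) by linarith
qed

lemma canon_eq:
  assumes "canon p x" "canon p y" "(of_nat p :: R) dvd (x - y)"
  shows "x = y"
proof (rule poly_mapping_eqI)
  fix \<mu>
  have "int p dvd (Poly_Mapping.lookup x \<mu> - Poly_Mapping.lookup y \<mu>)"
    using dvdR_lookup[OF assms(3), of \<mu>] by (simp add: lookup_minus)
  moreover obtain a b where ab: "a = Poly_Mapping.lookup x \<mu>" "b = Poly_Mapping.lookup y \<mu>" by blast
  moreover have "0 \<le> a" "a < int p" "0 \<le> b" "b < int p"
    using assms(1,2) ab unfolding canon_def by auto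
  ultimately show "Poly_Mapping.lookup x \<mu> = Poly_Mapping.lookup y \<mu>"
    using int_dvd_small by metis
qed

lemma torsion_free:
  assumes "p > 0" "(of_nat p :: R) * x = 0"
  shows "x = 0"
proof (rule poly_mapping_eqI)
  fix \<mu>
  have "int p * Poly_Mapping.lookup x \<mu> = 0" using assms(2) lookup_of_nat_mult[of p x \<mu>] by simp
  then show "Poly_Mapping.lookup x \<mu> = Poly_Mapping.lookup 0 \<mu>" using assms(1) by simp
qed

lemma modp_decomp: "x = modp p x + (of_nat p :: R) * Poly_Mapping.map (\<lambda>c. c div int p) x"
  by (rule poly_mapping_eqI) (simp add: modp_def lookup_of_nat_mult lookup_map0 lookup_add)

lemma canon_modp: "p > 0 \<Longrightarrow> canon p (modp p x)"
  by (simp add: canon_def modp_def lookup_map0)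

lemma keys_map_sub: "Poly_Mapping.keys (Poly_Mapping.map f x) \<subseteq> Poly_Mapping.keys x"
  by (auto simp: in_keys_iff Poly_Mapping.map.rep_eq when_def)

lemma canon_Rmap_inj:
  assumes "inj g" "canon p x" "p > 0"
  shows "canon p (Rmap g x)"
  unfolding canon_def
proof
  fix \<nu>
  show "0 \<le> Poly_Mapping.lookup (Rmap g x) \<nu> \<and> Poly_Mapping.lookup (Rmap g x) \<nu> < int p"
  proof (cases "\<nu> \<in> g ` Poly_Mapping.keys x")
    case True
    then obtain \<mu> where "\<nu> = g \<mu>" by auto
    then show ?thesis using lookup_Rmap_inj[OF assms(1)] assms(2) unfolding canon_def by simp
  next
    case False
    then show ?thesis using lookup_Rmap_notin[OF False] assms(3) by simp
  qed
qed

lemma inj_divs: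
  assumes "s > 0" shows "inj (divs s)"
proof (rule injI)
  fix a b assume "divs s a = divs s b"
  then have "mscale s (divs s a) = mscale s (divs s b)" by simp
  then show "a = b" using fun_cong[OF mscale_divs[OF assms], of a] fun_cong[OF mscale_divs[OF assms], of b] by simp
qed

lemma inj_mscale:
  assumes "s > 0" shows "inj (mscale s)"
proof (rule injI)
  fix a b assume "mscale s a = mscale s b"
  then have "divs s (mscale s a) = divs s (mscale s b)" by simp
  then show "a = b" using fun_cong[OF divs_mscale[OF assms], of a] fun_cong[OF divs_mscale[OF assms], of b] by simp
qed

definition piI :: "R poly \<Rightarrow> nat \<Rightarrow> R poly \<Rightarrow> bool" where
  "piI f e A \<longleftrightarrow> (\<exists>g h. A = f * g + monom 1 e * h)"

lemma piI_0 [simp]: "piI f e 0"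
  unfolding piI_def by (rule exI[of _ 0], rule exI[of _ 0]) simp

lemma piI_add:
  assumes "piI f e A" "piI f e B" shows "piI f e (A + B)"
proof -
  obtain g h where A: "A = f * g + monom 1 e * h" using assms(1) unfolding piI_def by blast
  obtain g' h' where B: "B = f * g' + monom 1 e * h'" using assms(2) unfolding piI_def by blast
  have "A + B = f * (g + g') + monom 1 e * (h + h')" unfolding A B by (simp add: algebra_simps)
  then show ?thesis unfolding piI_def by blast
qed

lemma piI_uminus:
  assumes "piI f e A" shows "piI f e (- A)"
proof -
  obtain g h where A: "A = f * g + monom 1 e * h" using assms(1) unfolding piI_def by blast
  have "- A = f * (- g) + monom 1 e * (- h)" unfolding A by (simp add: algebra_simps)
  then show ?thesis unfolding piI_def by blast
qed

lemma piI_diff: "piI f e A \<Longrightarrow> piI f e B \<Longrightarrow> piI f e (A - B)"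
  unfolding diff_conv_add_uminus by (intro piI_add piI_uminus)

lemma piI_mult_left: "piI f e A \<Longrightarrow> piI f e (B * A)"
  unfolding piI_def
proof (elim exE)
  fix g h assume "A = f * g + monom 1 e * h"
  then have "B * A = f * (B * g) + monom 1 e * (B * h)" by (simp add: algebra_simps)
  then show "\<exists>g h. B * A = f * g + monom 1 e * h" by blast
qed

lemma piI_mult_right: "piI f e A \<Longrightarrow> piI f e (A * B)"
  by (metis mult.commute piI_mult_left)

lemma piI_f: "piI f e (f * g)"
  unfolding piI_def by (rule exI[of _ g], rule exI[of _ 0]) simp

lemma piI_pi: "piI f e (monom 1 e * h)"
  unfolding piI_def by (rule exI[of _ 0], rule exI[of _ h]) simp

lemma monom_split: "e \<le> k \<Longrightarrow> monom c k = monom 1 e * monom (c::R) (k - e)"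
  by (simp add: mult_monom)

lemma piI_monom: "e \<le> k \<Longrightarrow> piI f e (monom c k)"
  by (metis monom_split piI_pi)

lemma piI_mono:
  assumes "e' \<le> e" "piI f e A" shows "piI f e' A"
proof -
  obtain g h where "A = f * g + monom 1 e * h" using assms(2) unfolding piI_def by blast
  then have "A = f * g + monom 1 e' * (monom 1 (e - e') * h)"
    using monom_split[OF assms(1), of 1] by (simp add: mult.assoc)
  then show ?thesis unfolding piI_def by blast
qed

lemma piI_prod:
  assumes "piI f e1 A" "piI f e2 B" shows "piI f (e1 + e2) (A * B)"
proof -
  obtain g h where A: "A = f * g + monom 1 e1 * h" using assms(1) unfolding piI_def by blast
  obtain g' h' where B: "B = f * g' + monom 1 e2 * h'" using assms(2) unfolding piI_def by blast
  have "A * B = f * (g * B + h * monom 1 e1 * g') + monom 1 (e1 + e2) * (h * h')"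
    unfolding A B by (simp add: algebra_simps mult_monom)
  then show ?thesis unfolding piI_def by blast
qed

lemma piI_sum: "(\<And>i. i \<in> S \<Longrightarrow> piI f e (F i)) \<Longrightarrow> piI f e (\<Sum>i\<in>S. F i)"
  by (induction S rule: infinite_finite_induct) (auto intro: piI_add)

lemma piI_pow2:
  assumes "piI f e A" "n \<ge> 2" shows "piI f (2 * e) (A ^ n)"
proof -
  have "A ^ n = (A * A) * A ^ (n - 2)" using assms(2)
    by (metis Suc_1 le_add_diff_inverse mult.assoc power2_eq_square power_add)
  moreover have "piI f (2 * e) (A * A)" using piI_prod[OF assms(1) assms(1)] by (simp add: mult_2)
  ultimately show ?thesis using piI_mult_right by metis
qed

lemma const_pow: "[:u:] ^ n = [:u ^ n:]"
  by (induction n) (simp_all add: one_pCons mult.commute)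

lemma lift_lemma:
  assumes p: "prime p" and P1: "piI f 1 [:of_nat p:]" and uv: "(of_nat p :: R) dvd (u - v)"
  shows "piI f (Suc k) ([:u ^ (p ^ k):] - [:v ^ (p ^ k):])"
proof (induction k)
  case 0
  obtain z where z: "u - v = of_nat p * z" using uv by blast
  have e: "[:u ^ (p ^ 0):] - [:v ^ (p ^ 0):] = [:of_nat p:] * [:z:]" using z by (simp add: diff_pCons)
  show ?case unfolding e using piI_mult_right[OF P1, of "[:z:]"] by simp
next
  case (Suc k)
  define U where "U = [:u ^ (p ^ k):]"
  define V where "V = [:v ^ (p ^ k):]"
  define D where "D = U - V"
  have D: "piI f (Suc k) D" using Suc unfolding D_def U_def V_def .
  obtain w where w: "(V + D) ^ p = V ^ p + D ^ p + of_nat p * D * w" using binom_p[OF p] by blast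
  have p2: "p \<ge> 2" using p prime_ge_2_nat by blast
  have "[:u ^ (p ^ Suc k):] - [:v ^ (p ^ Suc k):] = U ^ p - V ^ p"
    unfolding U_def V_def const_pow by (simp add: power_mult[symmetric] mult.commute)
  also have "\<dots> = D ^ p + [:of_nat p:] * D * w"
    using w unfolding D_def by (simp add: of_nat_poly)
  finally have eq: "[:u ^ (p ^ Suc k):] - [:v ^ (p ^ Suc k):] = D ^ p + [:of_nat p:] * D * w" .
  have a: "piI f (Suc (Suc k)) (D ^ p)"
    using piI_pow2[OF D p2] by (rule piI_mono[rotated]) simp
  have b: "piI f (Suc (Suc k)) ([:of_nat p:] * D * w)"
  proof -
    have "piI f (1 + Suc k) ([:of_nat p:] * D * w)" by (rule piI_mult_right[OF piI_prod[OF P1 D]])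
    then show ?thesis by simp
  qed
  show ?case unfolding eq using a b by (rule piI_add)
qed

lemma coeff_frel0: "coeff (frel p q t n) 0 = of_nat p"
  unfolding frel_def by (simp add: coeff_sum)

lemma frel_Suc: "frel p q t (Suc n) = frel p q t n - monom (term_R (Poly_Mapping.single (Om (Suc n)) ((of_nat q :: rat) powi t))) (Suc n)"
  unfolding frel_def by (simp add: algebra_simps)

lemma frel_split:
  assumes "i \<le> N"
  shows "frel p q t N = frel p q t i - (\<Sum>j\<in>{Suc i..N}. monom (term_R (Poly_Mapping.single (Om j) ((of_nat q :: rat) powi t))) j)"
  using assms
proof (induction N)
  case 0
  then show ?case by simp
next
  case (Suc N)
  show ?case
  proof (cases "i = Suc N")
    case True
    then show ?thesis by simp
  next
    case False
    then have "i \<le> N" using Suc.prems by simp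
    then show ?thesis using Suc.IH by (simp add: frel_Suc algebra_simps)
  qed
qed

lemma frel_P1: "piI (frel p q t n) 1 [:of_nat p:]"
proof -
  have "[:of_nat p:] = frel p q t n * 1 + (\<Sum>i\<in>{1..n}. monom (term_R (Poly_Mapping.single (Om i) ((of_nat q :: rat) powi t))) i)"
    unfolding frel_def by simp
  moreover have "piI (frel p q t n) 1 (\<Sum>i\<in>{1..n}. monom (term_R (Poly_Mapping.single (Om i) ((of_nat q :: rat) powi t))) i)"
    by (rule piI_sum) (rule piI_monom, simp)
  ultimately show ?thesis using piI_add[OF piI_f[of "frel p q t n" _ 1]] by simp
qed

lemma frel_mono:
  assumes "i \<le> N" "piI (frel p q t N) (Suc N) A"
  shows "piI (frel p q t i) (Suc i) A"
proof -
  have A: "piI (frel p q t N) (Suc i) A" using piI_mono[OF _ assms(2), of "Suc i"] assms(1) by simp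
  then obtain g h where gh: "A = frel p q t N * g + monom 1 (Suc i) * h" unfolding piI_def by blast
  define S where "S = (\<Sum>j\<in>{Suc i..N}. monom (term_R (Poly_Mapping.single (Om j) ((of_nat q :: rat) powi t))) j)"
  have S: "piI (frel p q t i) (Suc i) S" unfolding S_def by (rule piI_sum) (rule piI_monom, simp)
  have fe: "frel p q t N = frel p q t i - S" unfolding S_def by (rule frel_split[OF assms(1)])
  have "A = frel p q t i * g - S * g + monom 1 (Suc i) * h"
    unfolding gh fe by (simp only: left_diff_distrib)
  moreover have "piI (frel p q t i) (Suc i) (frel p q t i * g - S * g + monom 1 (Suc i) * h)"
    by (intro piI_add piI_diff piI_f piI_pi piI_mult_right[OF S])
  ultimately show ?thesis by simp
qed

lemma TC:
  assumes p: "prime p"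
  shows "piI (frel p q t n) (Suc n) ([:teich p (Suc n) a:] - [:teich p n a:])"
proof -
  have "piI (frel p q t n) (Suc n) ([:((rootR (p ^ Suc n) a) ^ p) ^ (p ^ n):] - [:(rootR (p ^ n) a) ^ (p ^ n):])"
    by (rule lift_lemma[OF p frel_P1 teich_step[OF p]])
  then show ?thesis unfolding teich_def by (simp add: power_mult[symmetric])
qed

lemma TC_iter:
  assumes p: "prime p" and "i \<le> N"
  shows "piI (frel p q t i) (Suc i) ([:teich p N a:] - [:teich p i a:])"
  using assms(2)
proof (induction N)
  case 0
  then show ?case by simp
next
  case (Suc N)
  show ?case
  proof (cases "i = Suc N")
    case True
    then show ?thesis by simp
  next
    case False
    then have iN: "i \<le> N" using Suc.prems by simp
    have "piI (frel p q t i) (Suc i) ([:teich p (Suc N) a:] - [:teich p N a:])"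
      using frel_mono[OF iN TC[OF p]] .
    then show ?thesis using Suc.IH[OF iN] piI_add by fastforce
  qed
qed

lemma coeff_piI0:
  assumes "piI (frel p q t n) e D" "e \<ge> 1"
  shows "(of_nat p :: R) dvd coeff D 0"
proof -
  obtain g h where D: "D = frel p q t n * g + monom 1 e * h" using assms(1) unfolding piI_def by blast
  have "coeff D 0 = of_nat p * coeff g 0"
    unfolding D using assms(2) by (simp add: coeff_mult_0 coeff_frel0 coeff_monom)
  then show ?thesis by simp
qed

lemma U0:
  assumes p: "prime p" and ca: "canon p a" and cb: "canon p b"
    and D: "piI (frel p q t n) (Suc n) D" and c0: "coeff D 0 = teich p n a - teich p n b"
  shows "a = b"
proof -
  have d1: "(of_nat p :: R) dvd (teich p n a - teich p n b)"
    using coeff_piI0[OF D] c0 by simp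
  have d2: "(of_nat p :: R) dvd (teich p n a - a)" by (rule teich_cong[OF p])
  have d3: "(of_nat p :: R) dvd (teich p n b - b)" by (rule teich_cong[OF p])
  have "a - b = (teich p n a - teich p n b) - (teich p n a - a) + (teich p n b - b)" by simp
  then have "(of_nat p :: R) dvd (a - b)" using d1 d2 d3 by (metis dvd_add dvd_diff)
  then show ?thesis by (rule canon_eq[OF ca cb])
qed

lemma sum_monom_diff:
  "(\<Sum>i\<le>n. monom (x i) i) - (\<Sum>i\<le>n. monom (y i) i) = (\<Sum>i\<le>n. monom (x i - y i) i :: R poly)"
  by (simp only: sum_subtractf[symmetric] diff_monom)

lemma coeff_sum_monom0: "coeff (\<Sum>i\<le>n. monom (x i) i :: R poly) 0 = x 0"
  by (simp add: coeff_sum coeff_monom)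

lemma piI_monom_const:
  assumes "piI f e [:c:]" shows "piI f e (monom c i)"
proof -
  have "monom c i = [:c:] * monom 1 i" by (simp add: monom_altdef)
  then show ?thesis using piI_mult_right[OF assms] by simp
qed

lemma U:
  assumes p: "prime p"
  shows "(\<forall>i\<le>n. canon p (a i) \<and> canon p (b i)) \<Longrightarrow>
     piI (frel p q t n) (Suc n) ((\<Sum>i\<le>n. monom (teich p n (a i)) i) - (\<Sum>i\<le>n. monom (teich p n (b i)) i))
     \<Longrightarrow> \<forall>i\<le>n. a i = b i"
proof (induction n arbitrary: a b)
  case 0
  have "a 0 = b 0"
    by (rule U0[OF p _ _ "0.prems"(2)]) (use "0.prems"(1) in \<open>simp_all add: coeff_sum_monom0 sum_monom_diff\<close>)
  then show ?case by simp
next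
  case (Suc n)
  define d where "d i = teich p (Suc n) (a i) - teich p (Suc n) (b i)" for i
  have D: "piI (frel p q t (Suc n)) (Suc (Suc n)) (\<Sum>i\<le>Suc n. monom (d i) i)"
    using Suc.prems(2) unfolding sum_monom_diff d_def .
  have a0: "a 0 = b 0"
    by (rule U0[OF p _ _ D]) (use Suc.prems(1) in \<open>simp_all add: coeff_sum_monom0 d_def\<close>)
  define Y where "Y = (\<Sum>i\<le>n. monom (d (Suc i)) i)"
  have DY: "(\<Sum>i\<le>Suc n. monom (d i) i) = pCons 0 Y"
  proof -
    have "(\<Sum>i\<le>Suc n. monom (d i) i) = monom (d 0) 0 + (\<Sum>i\<le>n. monom (d (Suc i)) (Suc i))"
      by (rule sum.atMost_Suc_shift)
    also have "monom (d 0) 0 = 0" using a0 by (simp add: d_def)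
    also have "(\<Sum>i\<le>n. monom (d (Suc i)) (Suc i)) = pCons 0 Y"
      unfolding Y_def monom_Suc by (induction n) (simp_all add: add_pCons[symmetric])
    finally show ?thesis by simp
  qed
  obtain g h where gh: "pCons 0 Y = frel p q t (Suc n) * g + monom 1 (Suc (Suc n)) * h"
    using D unfolding DY piI_def by blast
  have "coeff (pCons 0 Y) 0 = of_nat p * coeff g 0"
    unfolding gh by (simp add: coeff_mult_0 coeff_frel0 coeff_monom)
  then have "(of_nat p :: R) * coeff g 0 = 0" by simp
  then have g0: "coeff g 0 = 0" using torsion_free p prime_gt_0_nat by blast
  obtain g' where g': "g = pCons 0 g'"
    using g0 by (cases g) auto
  have "pCons 0 Y = pCons 0 (frel p q t (Suc n) * g' + monom 1 (Suc n) * h)"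
    unfolding gh g' by (simp add: monom_Suc)
  then have Yeq: "Y = frel p q t (Suc n) * g' + monom 1 (Suc n) * h" by simp
  define w where "w = term_R (Poly_Mapping.single (Om (Suc n)) ((of_nat q :: rat) powi t))"
  have "Y = frel p q t n * g' - monom w (Suc n) * g' + monom 1 (Suc n) * h"
    unfolding Yeq frel_Suc w_def by (simp add: algebra_simps)
  moreover have "piI (frel p q t n) (Suc n) (frel p q t n * g' - monom w (Suc n) * g' + monom 1 (Suc n) * h)"
    by (intro piI_add piI_diff piI_f piI_pi piI_mult_right piI_monom) simp
  ultimately have Y: "piI (frel p q t n) (Suc n) Y" by simp
  define Y' where "Y' = (\<Sum>i\<le>n. monom (teich p n (a (Suc i)) - teich p n (b (Suc i))) i)"
  have YY': "piI (frel p q t n) (Suc n) (Y - Y')"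
    unfolding Y_def Y'_def sum_subtractf[symmetric] diff_monom
  proof (rule piI_sum, rule piI_monom_const)
    fix i
    have e: "[:d (Suc i) - (teich p n (a (Suc i)) - teich p n (b (Suc i))):]
      = ([:teich p (Suc n) (a (Suc i)):] - [:teich p n (a (Suc i)):])
        - ([:teich p (Suc n) (b (Suc i)):] - [:teich p n (b (Suc i)):])"
      unfolding d_def by (simp add: diff_pCons)
    show "piI (frel p q t n) (Suc n) [:d (Suc i) - (teich p n (a (Suc i)) - teich p n (b (Suc i))):]"
      unfolding e by (intro piI_diff TC[OF p])
  qed
  have Y': "piI (frel p q t n) (Suc n) Y'"
  proof -
    have "Y' = Y - (Y - Y')" by simp
    then show ?thesis using piI_diff[OF Y YY'] by simp
  qed
  have IH: "\<forall>i\<le>n. a (Suc i) = b (Suc i)"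
    by (rule Suc.IH[of "\<lambda>i. a (Suc i)" "\<lambda>i. b (Suc i)"])
       (use Suc.prems(1) Y' in \<open>simp_all add: Y'_def sum_monom_diff\<close>)
  show ?case
  proof (intro allI impI)
    fix i assume "i \<le> Suc n"
    then show "a i = b i" using a0 IH by (cases i) auto
  qed
qed

definition good :: "nat \<Rightarrow> nat \<Rightarrow> mon \<Rightarrow> bool" where
  "good p N \<mu> \<longleftrightarrow> (\<forall>v. (Poly_Mapping.lookup \<mu> v \<noteq> 0 \<longrightarrow> (\<forall>i. v = Om i \<longrightarrow> 1 \<le> i \<and> i \<le> N))
      \<and> padic_exp p (Poly_Mapping.lookup \<mu> v))"

definition Rg :: "nat \<Rightarrow> nat \<Rightarrow> R \<Rightarrow> bool" where
  "Rg p N x \<longleftrightarrow> (\<forall>\<mu>\<in>Poly_Mapping.keys x. good p N \<mu>)"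

lemma padic_0 [simp]: "padic_exp p 0"
  unfolding padic_exp_def by (rule conjI, simp, rule exI[of _ 0]) simp

lemma padic_add:
  assumes "padic_exp p a" "padic_exp p b" shows "padic_exp p (a + b)"
proof -
  obtain k l where k: "a * of_nat p ^ k \<in> \<int>" and l: "b * of_nat p ^ l \<in> \<int>"
    and a0: "0 \<le> a" and b0: "0 \<le> b" using assms unfolding padic_exp_def by blast
  have "(a + b) * of_nat p ^ (k + l) = (a * of_nat p ^ k) * of_nat p ^ l + (b * of_nat p ^ l) * of_nat p ^ k"
    by (simp add: algebra_simps power_add)
  also have "\<dots> \<in> \<int>"
  proof (rule Ints_add)
    show "(a * of_nat p ^ k) * of_nat p ^ l \<in> \<int>" by (rule Ints_mult[OF k]) simp
    show "(b * of_nat p ^ l) * of_nat p ^ k \<in> \<int>" by (rule Ints_mult[OF l]) simp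
  qed
  finally show ?thesis unfolding padic_exp_def using a0 b0 by auto
qed

lemma padic_div:
  assumes "p > 0" "padic_exp p a" shows "padic_exp p (a / of_nat (p ^ n))"
proof -
  obtain k where k: "a * of_nat p ^ k \<in> \<int>" and a0: "0 \<le> a" using assms unfolding padic_exp_def by blast
  have "a / of_nat (p ^ n) * of_nat p ^ (k + n) = a * of_nat p ^ k"
    using assms(1) by (simp add: power_add field_simps)
  then show ?thesis unfolding padic_exp_def using a0 k by (metis divide_nonneg_nonneg of_nat_0_le_iff)
qed

lemma padic_mult_nat:
  assumes "padic_exp p a" shows "padic_exp p (of_nat k * a)"
proof -
  obtain l where l: "a * of_nat p ^ l \<in> \<int>" and a0: "0 \<le> a" using assms unfolding padic_exp_def by blast
  have "of_nat k * a * of_nat p ^ l = of_nat k * (a * of_nat p ^ l)" by simp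
  also have "\<dots> \<in> \<int>" by (rule Ints_mult[OF _ l]) simp
  finally show ?thesis unfolding padic_exp_def using a0 by auto
qed

lemma good_0 [simp]: "good p N 0"
  unfolding good_def by simp

lemma good_add:
  assumes "good p N a" "good p N b" shows "good p N (a + b)"
  unfolding good_def
proof
  fix v
  have 1: "Poly_Mapping.lookup a v \<noteq> 0 \<longrightarrow> (\<forall>i. v = Om i \<longrightarrow> 1 \<le> i \<and> i \<le> N)"
       "padic_exp p (Poly_Mapping.lookup a v)" using assms(1) unfolding good_def by auto
  have 2: "Poly_Mapping.lookup b v \<noteq> 0 \<longrightarrow> (\<forall>i. v = Om i \<longrightarrow> 1 \<le> i \<and> i \<le> N)"
       "padic_exp p (Poly_Mapping.lookup b v)" using assms(2) unfolding good_def by auto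
  show "(Poly_Mapping.lookup (a + b) v \<noteq> 0 \<longrightarrow> (\<forall>i. v = Om i \<longrightarrow> 1 \<le> i \<and> i \<le> N))
      \<and> padic_exp p (Poly_Mapping.lookup (a + b) v)"
    using 1 2 padic_add[OF 1(2) 2(2)] by (auto simp: lookup_add)
qed

lemma good_mscale: "good p N \<mu> \<Longrightarrow> good p N (mscale k \<mu>)"
  unfolding good_def by (auto intro: padic_mult_nat)

lemma good_divs: "p > 0 \<Longrightarrow> good p N \<mu> \<Longrightarrow> good p N (divs (p ^ n) \<mu>)"
  unfolding good_def using padic_div by (auto simp del: of_nat_power)

lemma Rg_0 [simp]: "Rg p N 0"
  unfolding Rg_def by simp

lemma Rg_add: "Rg p N x \<Longrightarrow> Rg p N y \<Longrightarrow> Rg p N (x + y)"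
  unfolding Rg_def using keys_add[of x y] by (auto simp del: keys_add)

lemma Rg_uminus: "Rg p N x \<Longrightarrow> Rg p N (- x)"
  unfolding Rg_def by simp

lemma Rg_diff: "Rg p N x \<Longrightarrow> Rg p N y \<Longrightarrow> Rg p N (x - y)"
  unfolding diff_conv_add_uminus by (intro Rg_add Rg_uminus)

lemma Rg_mult: "Rg p N x \<Longrightarrow> Rg p N y \<Longrightarrow> Rg p N (x * y)"
  unfolding Rg_def
proof
  fix \<mu> assume a: "\<forall>\<mu>\<in>Poly_Mapping.keys x. good p N \<mu>" "\<forall>\<mu>\<in>Poly_Mapping.keys y. good p N \<mu>"
    and m: "\<mu> \<in> Poly_Mapping.keys (x * y)"
  then obtain a b where "\<mu> = a + b" "a \<in> Poly_Mapping.keys x" "b \<in> Poly_Mapping.keys y"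
    using keys_mult[of x y] by blast
  then show "good p N \<mu>" using a good_add by simp
qed

lemma Rg_single: "good p N \<mu> \<Longrightarrow> Rg p N (Poly_Mapping.single \<mu> c)"
  unfolding Rg_def by simp

lemma Rg_one [simp]: "Rg p N 1"
  using Rg_single[OF good_0, of p N 1] by (simp only: single_one)

lemma Rg_of_nat [simp]: "Rg p N (of_nat n)"
  using Rg_single[OF good_0, of p N "of_nat n"] by (simp only: single_of_nat)

lemma Rg_sum: "(\<And>i. i \<in> S \<Longrightarrow> Rg p N (f i)) \<Longrightarrow> Rg p N (\<Sum>i\<in>S. f i)"
  by (induction S rule: infinite_finite_induct) (auto intro: Rg_add)

lemma Rg_pow: "Rg p N x \<Longrightarrow> Rg p N (x ^ n)"
  by (induction n) (auto intro: Rg_mult)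

lemma Rg_Rmap: "(\<And>\<mu>. good p N \<mu> \<Longrightarrow> good p N (g \<mu>)) \<Longrightarrow> Rg p N x \<Longrightarrow> Rg p N (Rmap g x)"
  unfolding Rg_def using keys_Rmap_sub[of g x] by auto

lemma Rg_map: "Rg p N x \<Longrightarrow> Rg p N (Poly_Mapping.map f x)"
  unfolding Rg_def using keys_map_sub[of f x] by auto

lemma Rg_modp: "Rg p N x \<Longrightarrow> Rg p N (modp p x)"
  unfolding modp_def by (rule Rg_map)

lemma Rg_rootR: "p > 0 \<Longrightarrow> Rg p N x \<Longrightarrow> Rg p N (rootR (p ^ n) x)"
  unfolding rootR_Rmap by (rule Rg_Rmap) (rule good_divs)

lemma Rg_teich: "p > 0 \<Longrightarrow> Rg p N x \<Longrightarrow> Rg p N (teich p n x)"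
  unfolding teich_def by (intro Rg_pow Rg_rootR)

definition RgP :: "nat \<Rightarrow> nat \<Rightarrow> R poly \<Rightarrow> bool" where
  "RgP p N A \<longleftrightarrow> (\<forall>j. Rg p N (coeff A j))"

lemma RgP_add: "RgP p N A \<Longrightarrow> RgP p N B \<Longrightarrow> RgP p N (A + B)"
  unfolding RgP_def by (simp add: Rg_add)

lemma RgP_mult: "RgP p N A \<Longrightarrow> RgP p N B \<Longrightarrow> RgP p N (A * B)"
  unfolding RgP_def coeff_mult by (auto intro!: Rg_sum Rg_mult)

lemma RgP_monom: "Rg p N c \<Longrightarrow> RgP p N (monom c i)"
  unfolding RgP_def by (simp add: coeff_monom)

lemma RgP_sum: "(\<And>i. i \<in> S \<Longrightarrow> RgP p N (f i)) \<Longrightarrow> RgP p N (\<Sum>i\<in>S. f i)"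
  unfolding RgP_def coeff_sum by (auto intro!: Rg_sum)

lemma RgP_0 [simp]: "RgP p N 0"
  unfolding RgP_def by simp

lemma RgP_pCons: "RgP p N (pCons a A) \<longleftrightarrow> Rg p N a \<and> RgP p N A"
  unfolding RgP_def by (auto simp: coeff_pCons split: nat.splits)

lemma padic_qpowi:
  assumes "q = p ^ r" "p > 0"
  shows "padic_exp p ((of_nat q :: rat) powi t)"
proof (cases "t \<ge> 0")
  case True
  then have "(of_nat q :: rat) powi t = of_nat (q ^ nat t)"
    by (simp add: power_int_def)
  then show ?thesis unfolding padic_exp_def by (metis Ints_of_nat mult.right_neutral of_nat_0_le_iff power_0)
next
  case False
  then have e: "(of_nat q :: rat) powi t = 1 / of_nat (p ^ (r * nat (- t)))"
    using assms by (simp add: power_int_def power_mult divide_inverse power_inverse)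
  have "padic_exp p 1" unfolding padic_exp_def by (rule conjI, simp, rule exI[of _ 0]) simp
  then show ?thesis unfolding e using padic_div[OF assms(2), of 1] by simp
qed

lemma Rg_omega:
  assumes "q = p ^ r" "p > 0" "1 \<le> i" "i \<le> N"
  shows "Rg p N (term_R (Poly_Mapping.single (Om i) ((of_nat q :: rat) powi t)))"
  unfolding term_R_def
proof (rule Rg_single)
  show "good p N (Poly_Mapping.single (Om i) ((of_nat q :: rat) powi t))"
    unfolding good_def using assms padic_qpowi[OF assms(1,2), of t]
    by (auto simp: lookup_single when_def)
qed

definition Sx :: "nat \<Rightarrow> int \<Rightarrow> nat \<Rightarrow> R poly" where
  "Sx q t N = (\<Sum>i\<in>{1..N}. monom (term_R (Poly_Mapping.single (Om i) ((of_nat q :: rat) powi t))) (i - 1))"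

lemma p_frel_Sx: "[:of_nat p:] = frel p q t N + monom 1 1 * Sx q t N"
proof -
  have "monom 1 1 * Sx q t N = (\<Sum>i\<in>{1..N}. monom (term_R (Poly_Mapping.single (Om i) ((of_nat q :: rat) powi t))) i)"
    unfolding Sx_def sum_distrib_left by (intro sum.cong) (auto simp: mult_monom)
  then show ?thesis unfolding frel_def by simp
qed

lemma RgP_Sx: "q = p ^ r \<Longrightarrow> p > 0 \<Longrightarrow> RgP p N (Sx q t N)"
  unfolding Sx_def by (intro RgP_sum RgP_monom Rg_omega) auto

lemma ring_id1:
  fixes Y C0 X1 Y' T P Wc F S M MT M1 :: "'a::comm_ring_1"
  assumes "Y = C0 + X1 * Y'" "C0 = T + P * Wc" "P = F + X1 * S" "M * T = MT" "M * X1 = M1"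
  shows "M * Y = MT + F * (M * Wc) + M1 * (S * Wc + Y')"
proof -
  have "M * Y = M * T + F * (M * Wc) + (M * X1) * (S * Wc + Y')"
    unfolding assms(1) assms(2) assms(3) by (simp add: algebra_simps)
  then show ?thesis using assms(4,5) by simp
qed

lemma ring_id2:
  fixes x s t mk y F G m1 yn :: "'a::comm_ring_1"
  assumes "mk * y = t + F * G + m1 * yn"
  shows "x - (s + t) - m1 * yn = (x - s - mk * y) + F * G"
  using assms by (simp add: algebra_simps)

lemma EX_k:
  assumes p: "prime p" and q: "q = p ^ r" and x: "RgP p N x"
  shows "k \<le> Suc N \<Longrightarrow> \<exists>a y. (\<forall>i. canon p (a i) \<and> Rg p N (a i)) \<and> RgP p N y \<and>
     piI (frel p q t N) (Suc N) (x - (\<Sum>i<k. monom (teich p N (a i)) i) - monom 1 k * y)"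
proof (induction k)
  case 0
  have p0: "p > 0" using p prime_gt_0_nat by blast
  have "canon p 0" unfolding canon_def using p0 by simp
  then show ?case
    by (intro exI[of _ "\<lambda>i. 0"] exI[of _ x]) (simp add: x)
next
  case (Suc k)
  have p0: "p > 0" using p prime_gt_0_nat by blast
  obtain a y where a: "\<forall>i. canon p (a i) \<and> Rg p N (a i)" and y: "RgP p N y"
    and I: "piI (frel p q t N) (Suc N) (x - (\<Sum>i<k. monom (teich p N (a i)) i) - monom 1 k * y)"
    using Suc by auto
  obtain y0 y' where yy: "y = pCons y0 y'" by (cases y) auto
  have y0: "Rg p N y0" and y': "RgP p N y'" using y unfolding yy RgP_pCons by auto
  define ak where "ak = modp p y0"
  have cak: "canon p ak" unfolding ak_def by (rule canon_modp[OF p0])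
  have Rak: "Rg p N ak" unfolding ak_def by (rule Rg_modp[OF y0])
  have d1: "(of_nat p :: R) dvd (y0 - ak)"
    using modp_decomp[of y0 p] unfolding ak_def by (metis add_diff_cancel_left' dvd_triv_left)
  have d2: "(of_nat p :: R) dvd (teich p N ak - ak)" by (rule teich_cong[OF p])
  have "(of_nat p :: R) dvd ((y0 - ak) - (teich p N ak - ak))" using d1 d2 by (rule dvd_diff)
  then have d: "(of_nat p :: R) dvd (y0 - teich p N ak)" by simp
  define W where "W = Poly_Mapping.map (\<lambda>c. c div int p) (y0 - teich p N ak)"
  have yW: "y0 - teich p N ak = of_nat p * W"
    unfolding W_def by (rule dvdR_witness) (rule dvdR_lookup[OF d])
  have RW: "Rg p N W" unfolding W_def by (intro Rg_map Rg_diff y0 Rg_teich p0 Rak)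
  define yn where "yn = Sx q t N * [:W:] + y'"
  have Ryn: "RgP p N yn" unfolding yn_def
    by (intro RgP_add RgP_mult RgP_Sx[OF q p0] y') (metis RgP_monom RW monom_0)
  have key: "monom 1 k * y = monom (teich p N ak) k + frel p q t N * (monom 1 k * [:W:]) + monom 1 (Suc k) * yn"
    unfolding yn_def
  proof (rule ring_id1)
    show "y = [:y0:] + monom 1 1 * y'" unfolding yy by (simp add: monom_Suc)
    show "[:y0:] = [:teich p N ak:] + [:of_nat p:] * [:W:]"
      using yW by (simp add: algebra_simps)
    show "[:of_nat p:] = frel p q t N + monom 1 1 * Sx q t N" by (rule p_frel_Sx)
    show "monom 1 k * [:teich p N ak:] = monom (teich p N ak) k" by (simp add: monom_altdef)
    show "monom 1 k * monom 1 1 = (monom 1 (Suc k) :: R poly)" by (simp add: mult_monom)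
  qed
  define a' where "a' = a(k := ak)"
  have sa: "(\<Sum>i<Suc k. monom (teich p N (a' i)) i) = (\<Sum>i<k. monom (teich p N (a i)) i) + monom (teich p N ak) k"
    unfolding a'_def by simp
  have eq: "x - (\<Sum>i<Suc k. monom (teich p N (a' i)) i) - monom 1 (Suc k) * yn
      = (x - (\<Sum>i<k. monom (teich p N (a i)) i) - monom 1 k * y) + frel p q t N * (monom 1 k * [:W:])"
    unfolding sa by (rule ring_id2[OF key])
  have I': "piI (frel p q t N) (Suc N) (x - (\<Sum>i<Suc k. monom (teich p N (a' i)) i) - monom 1 (Suc k) * yn)"
    unfolding eq by (rule piI_add[OF I piI_f])
  have a': "\<forall>i. canon p (a' i) \<and> Rg p N (a' i)" unfolding a'_def using a cak Rak by auto
  show ?case using a' Ryn I' by blast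
qed

lemma EX_N:
  assumes p: "prime p" and q: "q = p ^ r" and x: "RgP p N x"
  shows "\<exists>a. (\<forall>i. canon p (a i) \<and> Rg p N (a i)) \<and>
     piI (frel p q t N) (Suc N) (x - (\<Sum>i\<le>N. monom (teich p N (a i)) i))"
proof -
  obtain a y where a: "\<forall>i. canon p (a i) \<and> Rg p N (a i)"
    and I: "piI (frel p q t N) (Suc N) (x - (\<Sum>i<Suc N. monom (teich p N (a i)) i) - monom 1 (Suc N) * y)"
    using EX_k[OF p q x, of "Suc N" t] by auto
  have "piI (frel p q t N) (Suc N) ((x - (\<Sum>i<Suc N. monom (teich p N (a i)) i) - monom 1 (Suc N) * y) + monom 1 (Suc N) * y)"
    by (rule piI_add[OF I piI_pi])
  then have "piI (frel p q t N) (Suc N) (x - (\<Sum>i\<le>N. monom (teich p N (a i)) i))"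
    by (simp add: lessThan_Suc_atMost)
  then show ?thesis using a by blast
qed

definition opok :: "(R poly \<Rightarrow> R poly \<Rightarrow> R poly) \<Rightarrow> bool" where
  "opok op \<longleftrightarrow> op = (+) \<or> op = (*)"

definition xx :: "nat \<Rightarrow> (R poly \<Rightarrow> R poly \<Rightarrow> R poly) \<Rightarrow> nat \<Rightarrow> R poly" where
  "xx q op N = op (xser q Xv N) (xser q Yv N)"

lemma padic_1: "padic_exp p 1"
  unfolding padic_exp_def by (rule conjI, simp, rule exI[of _ 0]) simp

lemma RgP_xser:
  assumes q: "q = p ^ r" and p0: "p > 0" and V: "\<And>i j. V i \<noteq> Om j"
  shows "RgP p N (xser q V n)"
  unfolding xser_def
proof (intro RgP_sum RgP_monom)
  fix i
  have e: "1 / (of_nat q :: rat) ^ i = 1 / of_nat (p ^ (r * i))" using q by (simp add: power_mult)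
  have "padic_exp p (1 / (of_nat q :: rat) ^ i)" unfolding e by (rule padic_div[OF p0 padic_1])
  then show "Rg p N (term_R (Poly_Mapping.single (V i) (1 / of_nat q ^ i)))"
    unfolding term_R_def using V by (intro Rg_single) (auto simp: good_def lookup_single when_def)
qed

lemma RgP_xx:
  assumes "opok op" "q = p ^ r" "p > 0"
  shows "RgP p N (xx q op N)"
  using assms unfolding opok_def xx_def
  by (auto intro!: RgP_add RgP_mult RgP_xser)

lemma xser_trunc:
  assumes "i \<le> N"
  shows "monom 1 (Suc i) dvd (xser q V N - xser q V i)"
  using assms
proof (induction N)
  case 0
  then show ?case by simp
next
  case (Suc N)
  show ?case
  proof (cases "i = Suc N")
    case True
    then show ?thesis by simp
  next
    case False
    then have iN: "i \<le> N" using Suc.prems by simp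
    define m where "m = monom (term_R (Poly_Mapping.single (V (Suc N)) (1 / (of_nat q) ^ (Suc N)))) (Suc N)"
    have e: "xser q V (Suc N) - xser q V i = (xser q V N - xser q V i) + m"
      unfolding xser_def m_def by (simp add: algebra_simps)
    have "monom 1 (Suc i) dvd m"
      unfolding m_def using monom_split[of "Suc i" "Suc N"] iN by (metis Suc_le_mono dvd_triv_left)
    then show ?thesis unfolding e using Suc.IH[OF iN] by (simp add: dvd_add)
  qed
qed

lemma xx_trunc:
  assumes "opok op" "i \<le> N"
  shows "monom 1 (Suc i) dvd (xx q op N - xx q op i)"
proof -
  have X: "monom 1 (Suc i) dvd (xser q Xv N - xser q Xv i)" by (rule xser_trunc[OF assms(2)])
  have Y: "monom 1 (Suc i) dvd (xser q Yv N - xser q Yv i)" by (rule xser_trunc[OF assms(2)])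
  consider "op = (+)" | "op = (*)" using assms(1) unfolding opok_def by blast
  then show ?thesis
  proof cases
    case 1
    have "xx q op N - xx q op i = (xser q Xv N - xser q Xv i) + (xser q Yv N - xser q Yv i)"
      unfolding xx_def 1 by simp
    then show ?thesis using X Y by (simp add: dvd_add)
  next
    case 2
    have "xx q op N - xx q op i = xser q Xv N * (xser q Yv N - xser q Yv i) + (xser q Xv N - xser q Xv i) * xser q Yv i"
      unfolding xx_def 2 by (simp add: algebra_simps)
    then show ?thesis using X Y by (simp add: dvd_add dvd_mult dvd_mult2)
  qed
qed

lemma piI_of_dvd: "monom 1 e dvd A \<Longrightarrow> piI f e A"
  by (auto intro: piI_pi)

lemma sum_split_atMost:
  assumes "i \<le> N"
  shows "(\<Sum>j\<le>N. F j) = (\<Sum>j\<le>i. F j) + (\<Sum>j\<in>{Suc i..N}. (F j :: 'a::comm_monoid_add))"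
proof -
  have "{..N} = {..i} \<union> {Suc i..N}" using assms by auto
  then show ?thesis by (simp add: sum.union_disjoint)
qed

lemma ring_id3:
  fixes SiN Si xi xN SNi tl :: "'a::ab_group_add"
  shows "SiN - Si = (xi - Si) - (xN - (SNi + tl)) + (xN - xi) - tl - (SNi - SiN)"
  by (simp add: algebra_simps)

lemma compat:
  assumes p: "prime p" and op: "opok op" and iN: "i \<le> N"
    and AN: "piI (frel p q t N) (Suc N) (xx q op N - (\<Sum>j\<le>N. monom (teich p N (aN j)) j))"
    and Ai: "piI (frel p q t i) (Suc i) (xx q op i - (\<Sum>j\<le>i. monom (teich p i (ai j)) j))"
    and caN: "\<forall>j. canon p (aN j)" and cai: "\<forall>j. canon p (ai j)"
  shows "\<forall>j\<le>i. aN j = ai j"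
proof (rule U[OF p])
  show "\<forall>j\<le>i. canon p (aN j) \<and> canon p (ai j)" using caN cai by simp
  define SiN where "SiN = (\<Sum>j\<le>i. monom (teich p i (aN j)) j)"
  define Si where "Si = (\<Sum>j\<le>i. monom (teich p i (ai j)) j)"
  define SNi where "SNi = (\<Sum>j\<le>i. monom (teich p N (aN j)) j)"
  define tl where "tl = (\<Sum>j\<in>{Suc i..N}. monom (teich p N (aN j)) j)"
  have splitN: "(\<Sum>j\<le>N. monom (teich p N (aN j)) j) = SNi + tl"
    unfolding SNi_def tl_def by (rule sum_split_atMost[OF iN])
  have EN: "piI (frel p q t i) (Suc i) (xx q op N - (SNi + tl))"
    using frel_mono[OF iN AN] unfolding splitN .
  have Ei: "piI (frel p q t i) (Suc i) (xx q op i - Si)" using Ai unfolding Si_def .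
  have X: "piI (frel p q t i) (Suc i) (xx q op N - xx q op i)"
    by (rule piI_of_dvd[OF xx_trunc[OF op iN]])
  have T: "piI (frel p q t i) (Suc i) tl"
    unfolding tl_def by (rule piI_sum) (rule piI_monom, simp)
  have Z: "piI (frel p q t i) (Suc i) (SNi - SiN)"
    unfolding SNi_def SiN_def sum_subtractf[symmetric] diff_monom
  proof (rule piI_sum, rule piI_monom_const)
    fix j
    have "[:teich p N (aN j) - teich p i (aN j):] = [:teich p N (aN j):] - [:teich p i (aN j):]"
      by (simp add: diff_pCons)
    then show "piI (frel p q t i) (Suc i) [:teich p N (aN j) - teich p i (aN j):]"
      using TC_iter[OF p iN, of q t "aN j"] by simp
  qed
  have "piI (frel p q t i) (Suc i) ((xx q op i - Si) - (xx q op N - (SNi + tl)) + (xx q op N - xx q op i) - tl - (SNi - SiN))"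
    by (intro piI_diff piI_add Ei EN X T Z)
  then show "piI (frel p q t i) (Suc i) ((\<Sum>j\<le>i. monom (teich p i (aN j)) j) - (\<Sum>j\<le>i. monom (teich p i (ai j)) j))"
    unfolding SiN_def[symmetric] Si_def[symmetric] ring_id3[of SiN Si "xx q op i" "xx q op N" SNi tl] .
qed

lemma LXY_of:
  assumes "canon p x" "Rg p N x" shows "LXY_elem p x"
  using assms unfolding LXY_elem_def canon_def Rg_def good_def by (auto simp: in_keys_iff)

lemma canon_of_LXY:
  assumes "LXY_elem p x" "p > 0" shows "canon p x"
  unfolding canon_def
proof
  fix \<mu>
  show "0 \<le> Poly_Mapping.lookup x \<mu> \<and> Poly_Mapping.lookup x \<mu> < int p"
  proof (cases "\<mu> \<in> Poly_Mapping.keys x")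
    case True
    then show ?thesis using assms(1) unfolding LXY_elem_def by blast
  next
    case False
    then show ?thesis using assms(2) by (simp add: in_keys_iff)
  qed
qed

lemma Qexist:
  assumes p: "prime p" and q: "q = p ^ r" and op: "opok op"
  shows "\<exists>Q. Qprop p q t op Q \<and> (\<forall>i. Rg p i (Q i))"
proof -
  have p0: "p > 0" using p prime_gt_0_nat by blast
  have q0: "q > 0" using q p0 by simp
  define P where "P N a \<longleftrightarrow> (\<forall>i. canon p (a i) \<and> Rg p N (a i)) \<and>
     piI (frel p q t N) (Suc N) (xx q op N - (\<Sum>i\<le>N. monom (teich p N (a i)) i))" for N a
  define A where "A N = (SOME a. P N a)" for N
  have exP: "\<exists>a. P N a" for N
    unfolding P_def by (rule EX_N[OF p q RgP_xx[OF op q p0]])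
  have PA: "P N (A N)" for N
    unfolding A_def by (rule someI_ex[OF exP])
  define Q where "Q i = Rmap (mscale (q ^ i)) (A i i)" for i
  have rootQ: "rootR (q ^ i) (Q i) = A i i" for i
  proof -
    have qi: "q ^ i > 0" using q0 by simp
    show ?thesis unfolding Q_def rootR_Rmap Rmap_comp divs_mscale[OF qi] Rmap_id ..
  qed
  have cQ: "canon p (Q i)" for i
    unfolding Q_def using PA[of i] p0 q0 unfolding P_def by (intro canon_Rmap_inj inj_mscale) auto
  have RQ: "Rg p i (Q i)" for i
    unfolding Q_def using PA[of i] unfolding P_def by (intro Rg_Rmap good_mscale) auto
  have comp: "A i i = A N i" if "i \<le> N" for i N
  proof -
    have "\<forall>j\<le>i. A N j = A i j"
      by (rule compat[OF p op that]) (use PA[of N] PA[of i] in \<open>auto simp: P_def\<close>)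
    then show ?thesis by simp
  qed
  have "Qprop p q t op Q"
    unfolding Qprop_def
  proof (intro conjI allI)
    fix i show "LXY_elem p (Q i)" by (rule LXY_of[OF cQ RQ])
  next
    fix n
    have "(\<Sum>i\<le>n. monom (teich p n (rootR (q ^ i) (Q i))) i) = (\<Sum>i\<le>n. monom (teich p n (A n i)) i)"
      by (intro sum.cong) (auto simp: rootQ comp)
    then show "cong_pi p q t n (op (xser q Xv n) (xser q Yv n)) (\<Sum>i\<le>n. monom (teich p n (rootR (q ^ i) (Q i))) i)"
      using PA[of n] unfolding cong_pi_def P_def xx_def piI_def by simp
  qed
  then show ?thesis using RQ by blast
qed

lemma Qunique:
  assumes p: "prime p" and q: "q = p ^ r" and Q: "Qprop p q t op Q" and Q': "Qprop p q t op Q'"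
  shows "Q = Q'"
proof
  fix i
  have p0: "p > 0" using p prime_gt_0_nat by blast
  have q0: "q > 0" using q p0 by simp
  have cr: "canon p (rootR (q ^ j) (F j))" if "Qprop p q t op F" for F j
    unfolding rootR_Rmap
    by (rule canon_Rmap_inj[OF inj_divs canon_of_LXY]) (use that p0 q0 in \<open>auto simp: Qprop_def\<close>)
  define S where "S F = (\<Sum>j\<le>i. monom (teich p i (rootR (q ^ j) (F j))) j)" for F
  have E1: "piI (frel p q t i) (Suc i) (op (xser q Xv i) (xser q Yv i) - S Q)"
    using Q unfolding Qprop_def cong_pi_def piI_def S_def by blast
  have E2: "piI (frel p q t i) (Suc i) (op (xser q Xv i) (xser q Yv i) - S Q')"
    using Q' unfolding Qprop_def cong_pi_def piI_def S_def by blast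
  have "piI (frel p q t i) (Suc i) (S Q - S Q')"
    using piI_diff[OF E2 E1] by simp
  then have "\<forall>j\<le>i. rootR (q ^ j) (Q j) = rootR (q ^ j) (Q' j)"
    unfolding S_def by (intro U[OF p]) (auto intro: cr Q Q')
  then have "rootR (q ^ i) (Q i) = rootR (q ^ i) (Q' i)" by simp
  then have "Rmap (mscale (q ^ i)) (rootR (q ^ i) (Q i)) = Rmap (mscale (q ^ i)) (rootR (q ^ i) (Q' i))" by simp
  moreover have qi: "q ^ i > 0" using q0 by simp
  ultimately show "Q i = Q' i"
    unfolding rootR_Rmap Rmap_comp mscale_divs[OF qi] Rmap_id by simp
qed

lemma Qthe:
  assumes p: "prime p" and q: "q = p ^ r" and op: "opok op"
  shows "Qprop p q t op (THE Q. Qprop p q t op Q) \<and> (\<forall>i. Rg p i ((THE Q. Qprop p q t op Q) i))"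
proof -
  obtain Q where Q: "Qprop p q t op Q" "\<forall>i. Rg p i (Q i)" using Qexist[OF p q op] by blast
  have "(THE Q. Qprop p q t op Q) = Q"
    by (rule the_equality[of "Qprop p q t op" Q, OF Q(1)]) (use Qunique[OF p q] Q(1) in blast)
  then show ?thesis using Q by simp
qed

definition isOm :: "var \<Rightarrow> bool" where
  "isOm v \<longleftrightarrow> (\<exists>i. v = Om i)"

definition sg :: "nat \<Rightarrow> mon \<Rightarrow> mon" where
  "sg q \<mu> = Poly_Mapping.mapp (\<lambda>v e. if isOm v then of_nat q * e else e) \<mu>"

lemma lookup_sg [simp]:
  "Poly_Mapping.lookup (sg q \<mu>) v = (if isOm v then of_nat q * Poly_Mapping.lookup \<mu> v else Poly_Mapping.lookup \<mu> v)"
  unfolding sg_def lookup_mapp by (auto simp: when_def in_keys_iff)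

lemma sg_add: "sg q (a + b) = sg q a + sg q b"
  by (rule poly_mapping_eqI) (simp add: lookup_add algebra_simps)

lemma sg_0 [simp]: "sg q 0 = 0"
  by (rule poly_mapping_eqI) simp

lemma keys_sg: "q > 0 \<Longrightarrow> Poly_Mapping.keys (sg q \<mu>) = Poly_Mapping.keys \<mu>"
  by (auto simp: in_keys_iff split: if_splits)

lemma inj_sg:
  assumes "q > 0" shows "inj (sg q)"
proof (rule injI)
  fix a b assume e: "sg q a = sg q b"
  show "a = b"
  proof (rule poly_mapping_eqI)
    fix v
    have "Poly_Mapping.lookup (sg q a) v = Poly_Mapping.lookup (sg q b) v" using e by simp
    then show "Poly_Mapping.lookup a v = Poly_Mapping.lookup b v" using assms by (simp split: if_splits)
  qed
qed

abbreviation sig :: "nat \<Rightarrow> R \<Rightarrow> R" where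
  "sig q \<equiv> Rmap (sg q)"

lemma sig_add: "sig q (x + y) = sig q x + sig q y" by (rule Rmap_add)
lemma sig_diff: "sig q (x - y) = sig q x - sig q y" by (rule Rmap_diff)
lemma sig_mult: "sig q (x * y) = sig q x * sig q y" by (rule Rmap_mult) (rule sg_add)
lemma sig_0: "sig q 0 = 0" by simp
lemma sig_1: "sig q 1 = 1" by (rule Rmap_one) simp
lemma sig_pow: "sig q (x ^ n) = sig q x ^ n" by (rule Rmap_power) (simp_all add: sg_add)
lemma sig_of_nat: "sig q (of_nat n) = of_nat n" by (rule Rmap_of_nat) simp

lemma sig_sum: "sig q (\<Sum>i\<in>S. f i) = (\<Sum>i\<in>S. sig q (f i))" by (rule Rmap_sum)

lemma coeff_mp: "coeff (map_poly (sig q) A) n = sig q (coeff A n)"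
  by (rule coeff_map_poly) simp

lemma mp_add: "map_poly (sig q) (A + B) = map_poly (sig q) A + map_poly (sig q) B"
  by (rule poly_eqI) (simp add: coeff_mp sig_add)

lemma mp_diff: "map_poly (sig q) (A - B) = map_poly (sig q) A - map_poly (sig q) B"
  by (rule poly_eqI) (simp add: coeff_mp sig_diff)

lemma mp_mult: "map_poly (sig q) (A * B) = map_poly (sig q) A * map_poly (sig q) B"
  by (rule poly_eqI) (simp add: coeff_mp coeff_mult sig_sum sig_mult)

lemma mp_sum: "map_poly (sig q) (\<Sum>i\<in>S. f i) = (\<Sum>i\<in>S. map_poly (sig q) (f i))"
  by (induction S rule: infinite_finite_induct) (simp_all add: mp_add)

lemma mp_monom: "map_poly (sig q) (monom c n) = monom (sig q c) n"
  by (rule map_poly_monom) simp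

lemma mp_const: "map_poly (sig q) [:c:] = [:sig q c:]"
  by (simp add: map_poly_pCons)

lemma sg_single_Om: "sg q (Poly_Mapping.single (Om i) e) = Poly_Mapping.single (Om i) (of_nat q * e)"
  by (rule poly_mapping_eqI) (auto simp: lookup_single when_def isOm_def)

lemma sg_single_nonOm: "\<not> isOm v \<Longrightarrow> sg q (Poly_Mapping.single v e) = Poly_Mapping.single v e"
  by (rule poly_mapping_eqI) (auto simp: lookup_single when_def)

lemma mp_frel:
  assumes "q > 0"
  shows "map_poly (sig q) (frel p q t n) = frel p q (t + 1) n"
proof -
  have w: "sig q (term_R (Poly_Mapping.single (Om i) ((of_nat q :: rat) powi t)))
       = term_R (Poly_Mapping.single (Om i) ((of_nat q :: rat) powi (t + 1)))" for i
    unfolding term_R_def using assms by (simp add: sg_single_Om power_int_add_1')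
  show ?thesis
    unfolding frel_def mp_diff mp_sum mp_monom mp_const sig_of_nat w ..
qed

lemma mp_xser:
  assumes "\<And>i j. V i \<noteq> Om j"
  shows "map_poly (sig q) (xser q V n) = xser q V n"
proof -
  have "sig q (term_R (Poly_Mapping.single (V i) (1 / of_nat q ^ i))) = term_R (Poly_Mapping.single (V i) (1 / of_nat q ^ i))" for i
    unfolding term_R_def using assms by (simp add: sg_single_nonOm isOm_def)
  then show ?thesis unfolding xser_def mp_sum mp_monom by simp
qed

lemma mp_op:
  assumes "opok op"
  shows "map_poly (sig q) (op A B) = op (map_poly (sig q) A) (map_poly (sig q) B)"
  using assms unfolding opok_def by (auto simp: mp_add mp_mult)

lemma sg_divs: "sg q \<circ> divs s = divs s \<circ> sg q"
  by (intro ext poly_mapping_eqI) simp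

lemma sg_divs2: "sg q \<circ> (divs a \<circ> divs b) = divs a \<circ> (divs b \<circ> sg q)"
  by (intro ext poly_mapping_eqI) simp

lemma sig_teich: "sig q (teich p n (rootR s x)) = teich p n (rootR s (sig q x))"
  unfolding teich_def sig_pow rootR_Rmap Rmap_comp sg_divs2 ..

lemma mp_monom1: "map_poly (sig q) (monom 1 k) = monom 1 k"
  by (simp add: mp_monom sig_1)

lemma LXY_sig:
  assumes "q > 0" "LXY_elem p x" shows "LXY_elem p (sig q x)"
  unfolding LXY_elem_def
proof
  fix \<nu> assume "\<nu> \<in> Poly_Mapping.keys (sig q x)"
  then obtain \<mu> where \<mu>: "\<mu> \<in> Poly_Mapping.keys x" "\<nu> = sg q \<mu>"
    unfolding keys_Rmap_inj[OF inj_sg[OF assms(1)]] by blast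
  have l: "Poly_Mapping.lookup (sig q x) (sg q \<mu>) = Poly_Mapping.lookup x \<mu>"
    by (rule lookup_Rmap_inj[OF inj_sg[OF assms(1)]])
  have A: "0 \<le> Poly_Mapping.lookup x \<mu> \<and> Poly_Mapping.lookup x \<mu> < int p \<and>
        (\<forall>v\<in>Poly_Mapping.keys \<mu>. (\<forall>i. v = Om i \<longrightarrow> 1 \<le> i) \<and> padic_exp p (Poly_Mapping.lookup \<mu> v))"
    using assms(2) \<mu>(1) unfolding LXY_elem_def by blast
  show "0 \<le> Poly_Mapping.lookup (sig q x) \<nu> \<and> Poly_Mapping.lookup (sig q x) \<nu> < int p \<and>
        (\<forall>v\<in>Poly_Mapping.keys \<nu>. (\<forall>i. v = Om i \<longrightarrow> 1 \<le> i) \<and> padic_exp p (Poly_Mapping.lookup \<nu> v))"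
    using A unfolding \<mu>(2) l keys_sg[OF assms(1)] by (auto intro: padic_mult_nat)
qed

lemma good_sg: "good p N \<mu> \<Longrightarrow> good p N (sg q \<mu>)"
  unfolding good_def by (auto intro: padic_mult_nat)

lemma Rg_sig: "Rg p N x \<Longrightarrow> Rg p N (sig q x)"
  by (rule Rg_Rmap) (rule good_sg)

lemma Qprop_sig:
  assumes q0: "q > 0" and op: "opok op" and Q: "Qprop p q t op Q"
  shows "Qprop p q (t + 1) op (\<lambda>i. sig q (Q i))"
  unfolding Qprop_def
proof (intro conjI allI)
  fix i show "LXY_elem p (sig q (Q i))" using Q q0 LXY_sig unfolding Qprop_def by blast
next
  fix n
  obtain g h where gh: "op (xser q Xv n) (xser q Yv n) - (\<Sum>i\<le>n. monom (teich p n (rootR (q ^ i) (Q i))) i)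
      = frel p q t n * g + monom 1 (Suc n) * h"
    using Q unfolding Qprop_def cong_pi_def by blast
  have "map_poly (sig q) (op (xser q Xv n) (xser q Yv n) - (\<Sum>i\<le>n. monom (teich p n (rootR (q ^ i) (Q i))) i))
     = map_poly (sig q) (frel p q t n * g + monom 1 (Suc n) * h)"
    using gh by simp
  then have "op (xser q Xv n) (xser q Yv n) - (\<Sum>i\<le>n. monom (teich p n (rootR (q ^ i) (sig q (Q i)))) i)
     = frel p q (t + 1) n * map_poly (sig q) g + monom 1 (Suc n) * map_poly (sig q) h"
    unfolding mp_diff mp_add mp_mult mp_op[OF op] mp_xser[of Xv, simplified] mp_xser[of Yv, simplified]
      mp_sum mp_monom sig_teich mp_frel[OF q0] sig_1 .
  then show "cong_pi p q (t + 1) n (op (xser q Xv n) (xser q Yv n))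
       (\<Sum>i\<le>n. monom (teich p n (rootR (q ^ i) (sig q (Q i)))) i)"
    unfolding cong_pi_def by blast
qed

lemma Q_shift:
  assumes p: "prime p" and q: "q = p ^ r" and op: "opok op"
  shows "(THE Q. Qprop p q (t + 1) op Q) = (\<lambda>i. sig q ((THE Q. Qprop p q t op Q) i))"
proof -
  have q0: "q > 0" using q p prime_gt_0_nat by simp
  have A: "Qprop p q (t + 1) op (\<lambda>i. sig q ((THE Q. Qprop p q t op Q) i))"
    by (rule Qprop_sig[OF q0 op]) (use Qthe[OF p q op, of t] in blast)
  have B: "Qprop p q (t + 1) op (THE Q. Qprop p q (t + 1) op Q)"
    using Qthe[OF p q op, of "t + 1"] by blast
  show ?thesis by (rule Qunique[OF p q B A])
qed

definition Lmgood :: "nat \<Rightarrow> enat \<Rightarrow> mon \<Rightarrow> bool" where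
  "Lmgood p m \<nu> \<longleftrightarrow> (\<forall>v\<in>Poly_Mapping.keys \<nu>. (\<exists>i. v = Om i \<and> 1 \<le> i \<and> enat i \<le> m) \<and> padic_exp p (Poly_Mapping.lookup \<nu> v))"

lemma Lm_elem_single:
  assumes "Lmgood p m \<nu>" "0 \<le> c" "c < int p"
  shows "Lm_elem p m (Poly_Mapping.single \<nu> c)"
  using assms unfolding Lm_elem_def Lmgood_def by (cases "c = 0") auto

lemma Lmgood_0 [simp]: "Lmgood p m 0"
  unfolding Lmgood_def by simp

lemma Lmgood_mscale:
  assumes "Lmgood p m \<nu>" "j > 0" shows "Lmgood p m (mscale j \<nu>)"
proof -
  have k: "Poly_Mapping.keys (mscale j \<nu>) = Poly_Mapping.keys \<nu>" using assms(2) by (auto simp: in_keys_iff)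
  show ?thesis using assms(1) unfolding Lmgood_def k by (auto intro: padic_mult_nat)
qed

lemma modp_single: "modp p (Poly_Mapping.single \<nu> c) = Poly_Mapping.single \<nu> (c mod int p)"
  unfolding modp_def by (rule map_single) simp

lemma phi_0:
  assumes "Lm_alg p m \<phi>"
  shows "\<phi> 0 = 0"
proof -
  have "Lm_elem p m 0" unfolding Lm_elem_def by simp
  then have "\<phi> (modp p (0 + 0)) = \<phi> 0 + \<phi> 0" using assms unfolding Lm_alg_def by blast
  moreover have "modp p 0 = 0" unfolding modp_def by (rule poly_mapping_eqI) (simp add: lookup_map0)
  ultimately show ?thesis by simp
qed

lemma phi_char:
  assumes p: "prime p" and phi: "Lm_alg p m (\<phi> :: R \<Rightarrow> 'k::comm_ring_1)"
  shows "(of_nat p :: 'k) = 0"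
proof -
  have p1: "p > 1" using p prime_gt_1_nat by blast
  have one: "\<phi> 1 = 1" using phi unfolding Lm_alg_def by blast
  have L1: "Lm_elem p m 1" using Lm_elem_single[OF Lmgood_0, where c=1 and p=p and m=m] p1 by (simp flip: single_one)
  have step: "\<phi> (modp p (Poly_Mapping.single 0 (int j) + 1)) = \<phi> (Poly_Mapping.single 0 (int j)) + 1" if "j < p" for j
  proof -
    have "Lm_elem p m (Poly_Mapping.single 0 (int j))" using Lm_elem_single[OF Lmgood_0, where c="int j" and p=p and m=m] that by simp
    then show ?thesis using phi L1 one unfolding Lm_alg_def by simp
  qed
  have ms: "modp p (Poly_Mapping.single 0 (int j) + 1) = Poly_Mapping.single 0 (int (Suc j) mod int p)" for j
  proof -
    have "Poly_Mapping.single 0 (int j) + (1::R) = Poly_Mapping.single 0 (int j + 1)"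
      using single_add[of 0 "int j" 1] unfolding single_one by (rule sym)
    then show ?thesis by (simp add: modp_single add.commute)
  qed
  have ind: "\<phi> (Poly_Mapping.single 0 (int j)) = of_nat j" if "j < p" for j
    using that
  proof (induction j)
    case 0
    then show ?case using phi_0[OF phi] by simp
  next
    case (Suc j)
    have "\<phi> (Poly_Mapping.single 0 (int (Suc j))) = \<phi> (modp p (Poly_Mapping.single 0 (int j) + 1))"
      unfolding ms using Suc.prems by simp
    also have "\<dots> = of_nat j + 1" using step[of j] Suc by simp
    finally show ?case by simp
  qed
  have "\<phi> (modp p (Poly_Mapping.single 0 (int (p - 1)) + 1)) = of_nat (p - 1) + 1"
    using step[of "p - 1"] ind[of "p - 1"] p1 by simp
  moreover have "modp p (Poly_Mapping.single 0 (int (p - 1)) + 1) = 0"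
    unfolding ms using p1 by simp
  ultimately have "of_nat (p - 1) + 1 = (0 :: 'k)" using phi_0[OF phi] by simp
  then show ?thesis using p1 by (metis Suc_diff_1 of_nat_Suc add.commute zero_less_one less_trans)
qed

lemma frob_k_sum:
  fixes f :: "'b \<Rightarrow> 'k::comm_ring_1"
  assumes p: "prime p" and c: "(of_nat p :: 'k) = 0" and "finite S"
  shows "(\<Sum>i\<in>S. f i) ^ (p ^ r) = (\<Sum>i\<in>S. f i ^ (p ^ r))"
  using frob_sum_pow[OF p assms(3), of f r] c by simp

lemma phi_pow:
  assumes p: "prime p" and phi: "Lm_alg p m (\<phi> :: R \<Rightarrow> 'k::comm_ring_1)"
    and g: "Lmgood p m \<nu>" and c: "0 \<le> c" "c < int p"
  shows "j \<ge> 1 \<Longrightarrow> \<phi> (Poly_Mapping.single (mscale j \<nu>) (c ^ j mod int p)) = \<phi> (Poly_Mapping.single \<nu> c) ^ j"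
proof (induction j rule: dec_induct)
  case base
  have "mscale 1 \<nu> = \<nu>" by (rule poly_mapping_eqI) simp
  then show ?case using c by simp
next
  case (step j)
  have p0: "int p > 0" using p prime_gt_0_nat by simp
  have La: "Lm_elem p m (Poly_Mapping.single \<nu> c)" by (rule Lm_elem_single[OF g c])
  have Lb: "Lm_elem p m (Poly_Mapping.single (mscale j \<nu>) (c ^ j mod int p))"
    by (rule Lm_elem_single[OF Lmgood_mscale[OF g]]) (use step p0 in auto)
  have "\<phi> (modp p (Poly_Mapping.single \<nu> c * Poly_Mapping.single (mscale j \<nu>) (c ^ j mod int p)))
      = \<phi> (Poly_Mapping.single \<nu> c) * \<phi> (Poly_Mapping.single (mscale j \<nu>) (c ^ j mod int p))"
    using phi La Lb unfolding Lm_alg_def by blast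
  moreover have "modp p (Poly_Mapping.single \<nu> c * Poly_Mapping.single (mscale j \<nu>) (c ^ j mod int p))
      = Poly_Mapping.single (mscale (Suc j) \<nu>) (c ^ Suc j mod int p)"
  proof -
    have "\<nu> + mscale j \<nu> = mscale (Suc j) \<nu>" by (rule poly_mapping_eqI) (simp add: lookup_add algebra_simps)
    moreover have "c * (c ^ j mod int p) mod int p = c ^ Suc j mod int p" by (simp add: mod_mult_right_eq)
    ultimately show ?thesis by (simp add: mult_single modp_single)
  qed
  ultimately show ?case using step by simp
qed

lemma phi_frob:
  assumes p: "prime p" and phi: "Lm_alg p m (\<phi> :: R \<Rightarrow> 'k::comm_ring_1)"
    and g: "Lmgood p m \<nu>" and c: "0 \<le> c" "c < int p"
  shows "\<phi> (Poly_Mapping.single (mscale (p ^ r) \<nu>) c) = \<phi> (Poly_Mapping.single \<nu> c) ^ (p ^ r)"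
proof -
  have "int p dvd (c ^ (p ^ r) - c)" by (rule fermat_int_pow[OF p])
  then have "c ^ (p ^ r) mod int p = c mod int p" by (simp add: mod_eq_dvd_iff)
  also have "\<dots> = c" using c by simp
  finally have e: "c ^ (p ^ r) mod int p = c" .
  have "p ^ r \<ge> 1" using p prime_gt_0_nat by (simp add: Suc_leI)
  then show ?thesis using phi_pow[OF p phi g c, of "p ^ r"] e by simp
qed

lemma lookup_omega_part: "Poly_Mapping.lookup (omega_part \<mu>) v = (if isOm v then Poly_Mapping.lookup \<mu> v else 0)"
proof -
  have "Poly_Mapping.lookup (omega_part \<mu>) v =
    (\<Sum>w\<in>{w\<in>Poly_Mapping.keys \<mu>. \<exists>i. w = Om i}. if w = v then Poly_Mapping.lookup \<mu> w else 0)"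
    unfolding omega_part_def by (rule lookup_sum_single) simp
  also have "\<dots> = (if isOm v then Poly_Mapping.lookup \<mu> v else 0)"
    by (auto simp: isOm_def in_keys_iff)
  finally show ?thesis .
qed

lemma omega_part_sg: "omega_part (sg q \<mu>) = mscale q (omega_part \<mu>)"
  by (rule poly_mapping_eqI) (simp add: lookup_omega_part)

lemma Lmgood_omega_part:
  assumes "good p n \<mu>" "enat n \<le> m"
  shows "Lmgood p m (omega_part \<mu>)"
  unfolding Lmgood_def
proof
  fix v assume v: "v \<in> Poly_Mapping.keys (omega_part \<mu>)"
  then have om: "isOm v" and l: "Poly_Mapping.lookup \<mu> v \<noteq> 0"
    by (auto simp: in_keys_iff lookup_omega_part split: if_splits)
  obtain i where i: "v = Om i" using om unfolding isOm_def by blast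
  have "1 \<le> i \<and> i \<le> n" "padic_exp p (Poly_Mapping.lookup \<mu> v)"
    using assms(1) l i unfolding good_def by auto
  then show "(\<exists>i. v = Om i \<and> 1 \<le> i \<and> enat i \<le> m) \<and> padic_exp p (Poly_Mapping.lookup (omega_part \<mu>) v)"
    using i om order_trans[of "enat i" "enat n" m] assms(2) by (auto simp: lookup_omega_part)
qed

lemma evalQ_sig:
  assumes p: "prime p" and q: "q = p ^ r" and phi: "Lm_alg p m (\<phi> :: R \<Rightarrow> 'k::comm_ring_1)"
    and L: "LXY_elem p Q" and G: "Rg p n Q" and nm: "enat n \<le> m"
  shows "evalQ \<phi> (sig q Q) (\<lambda>i. a i ^ q) (\<lambda>i. b i ^ q) = (evalQ \<phi> Q a b) ^ q"
proof -
  have q0: "q > 0" using q p prime_gt_0_nat by simp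
  have ch: "(of_nat p :: 'k) = 0" by (rule phi_char[OF p phi])
  define T where "T \<mu> = \<phi> (Poly_Mapping.single (omega_part \<mu>) (Poly_Mapping.lookup Q \<mu>)) *
      (\<Prod>v\<in>Poly_Mapping.keys \<mu>. (case v of Xv j \<Rightarrow> a j ^ nat \<lfloor>Poly_Mapping.lookup \<mu> v\<rfloor>
                              | Yv j \<Rightarrow> b j ^ nat \<lfloor>Poly_Mapping.lookup \<mu> v\<rfloor>
                              | Om _ \<Rightarrow> 1))" for \<mu>
  have "evalQ \<phi> (sig q Q) (\<lambda>i. a i ^ q) (\<lambda>i. b i ^ q) = (\<Sum>\<mu>\<in>Poly_Mapping.keys Q. T \<mu> ^ q)"
    unfolding evalQ_def keys_Rmap_inj[OF inj_sg[OF q0]]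
  proof (subst sum.reindex)
    show "inj_on (sg q) (Poly_Mapping.keys Q)" using inj_sg[OF q0] by (rule inj_on_subset) simp
  next
    show "sum ((\<lambda>\<mu>. \<phi> (Poly_Mapping.single (omega_part \<mu>) (Poly_Mapping.lookup (sig q Q) \<mu>)) *
              (\<Prod>v\<in>Poly_Mapping.keys \<mu>. case v of Xv j \<Rightarrow> (a j ^ q) ^ nat \<lfloor>Poly_Mapping.lookup \<mu> v\<rfloor>
                    | Yv j \<Rightarrow> (b j ^ q) ^ nat \<lfloor>Poly_Mapping.lookup \<mu> v\<rfloor> | Om x \<Rightarrow> 1)) \<circ> sg q)
          (Poly_Mapping.keys Q) = (\<Sum>\<mu>\<in>Poly_Mapping.keys Q. T \<mu> ^ q)"
    proof (rule sum.cong[OF refl])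
      fix \<mu> assume \<mu>: "\<mu> \<in> Poly_Mapping.keys Q"
      have cQ: "0 \<le> Poly_Mapping.lookup Q \<mu>" "Poly_Mapping.lookup Q \<mu> < int p"
        using L \<mu> unfolding LXY_elem_def by auto
      have gm: "good p n \<mu>" using G \<mu> unfolding Rg_def by blast
      have ph: "\<phi> (Poly_Mapping.single (omega_part (sg q \<mu>)) (Poly_Mapping.lookup (sig q Q) (sg q \<mu>)))
          = \<phi> (Poly_Mapping.single (omega_part \<mu>) (Poly_Mapping.lookup Q \<mu>)) ^ q"
      proof -
        have lk: "Poly_Mapping.lookup (sig q Q) (sg q \<mu>) = Poly_Mapping.lookup Q \<mu>"
          by (rule lookup_Rmap_inj[OF inj_sg[OF q0]])
        show ?thesis unfolding omega_part_sg lk unfolding q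
          by (rule phi_frob[OF p phi Lmgood_omega_part[OF gm nm] cQ])
      qed
      have pr: "(\<Prod>v\<in>Poly_Mapping.keys (sg q \<mu>). case v of Xv j \<Rightarrow> (a j ^ q) ^ nat \<lfloor>Poly_Mapping.lookup (sg q \<mu>) v\<rfloor>
                    | Yv j \<Rightarrow> (b j ^ q) ^ nat \<lfloor>Poly_Mapping.lookup (sg q \<mu>) v\<rfloor> | Om x \<Rightarrow> 1)
          = (\<Prod>v\<in>Poly_Mapping.keys \<mu>. (case v of Xv j \<Rightarrow> a j ^ nat \<lfloor>Poly_Mapping.lookup \<mu> v\<rfloor>
                              | Yv j \<Rightarrow> b j ^ nat \<lfloor>Poly_Mapping.lookup \<mu> v\<rfloor>
                              | Om _ \<Rightarrow> 1)) ^ q"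
        unfolding keys_sg[OF q0] prod_power_distrib
      proof (rule prod.cong[OF refl])
        fix v show "(case v of Xv j \<Rightarrow> (a j ^ q) ^ nat \<lfloor>Poly_Mapping.lookup (sg q \<mu>) v\<rfloor>
                    | Yv j \<Rightarrow> (b j ^ q) ^ nat \<lfloor>Poly_Mapping.lookup (sg q \<mu>) v\<rfloor> | Om x \<Rightarrow> 1)
           = (case v of Xv j \<Rightarrow> a j ^ nat \<lfloor>Poly_Mapping.lookup \<mu> v\<rfloor>
                              | Yv j \<Rightarrow> b j ^ nat \<lfloor>Poly_Mapping.lookup \<mu> v\<rfloor>
                              | Om _ \<Rightarrow> 1) ^ q"
          by (cases v) (simp_all add: isOm_def flip: power_mult, simp_all add: mult.commute)
      qed
      show "((\<lambda>\<mu>. \<phi> (Poly_Mapping.single (omega_part \<mu>) (Poly_Mapping.lookup (sig q Q) \<mu>)) *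
              (\<Prod>v\<in>Poly_Mapping.keys \<mu>. case v of Xv j \<Rightarrow> (a j ^ q) ^ nat \<lfloor>Poly_Mapping.lookup \<mu> v\<rfloor>
                    | Yv j \<Rightarrow> (b j ^ q) ^ nat \<lfloor>Poly_Mapping.lookup \<mu> v\<rfloor> | Om x \<Rightarrow> 1)) \<circ> sg q) \<mu> = T \<mu> ^ q"
        unfolding o_def ph pr T_def by (simp add: power_mult_distrib)
    qed
  qed
  also have "\<dots> = (\<Sum>\<mu>\<in>Poly_Mapping.keys Q. T \<mu>) ^ q"
    unfolding q by (rule frob_k_sum[OF p ch, symmetric]) simp
  also have "(\<Sum>\<mu>\<in>Poly_Mapping.keys Q. T \<mu>) = evalQ \<phi> Q a b"
    unfolding evalQ_def T_def ..
  finally show ?thesis .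
qed

lemma hom_pow:
  assumes "g 1 = 1" "\<forall>x y. g (x * y) = g x * g y"
  shows "g (x ^ n) = g x ^ n"
  using assms by (induction n) auto

theorem proposition2p7:
  fixes p r q :: nat and t :: int and m :: enat and \<phi> :: "R \<Rightarrow> 'k::comm_ring_1"
  assumes "prime p" and "r \<ge> 1" and "q = p ^ r" and "Lm_alg p m \<phi>"
  shows "(\<forall>a b n. enat n \<le> m \<longrightarrow>
            Frob q (W_add p q t \<phi> a b) n = W_add p q (t + 1) \<phi> (Frob q a) (Frob q b) n) \<and>
         (\<forall>a b n. enat n \<le> m \<longrightarrow>
            Frob q (W_mul p q t \<phi> a b) n = W_mul p q (t + 1) \<phi> (Frob q a) (Frob q b) n) \<and>
         (\<forall>n. enat n \<le> m \<longrightarrow> Frob q (W_one :: nat \<Rightarrow> 'k) n = W_one n) \<and>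
         (\<forall>n. enat n \<le> m \<longrightarrow> Frob q (W_zero :: nat \<Rightarrow> 'k) n = W_zero n) \<and>
         (\<forall>(\<psi> :: R \<Rightarrow> 'l::comm_ring_1) (g :: 'k \<Rightarrow> 'l).
            Lm_alg p m \<psi> \<longrightarrow> g 1 = 1 \<longrightarrow> (\<forall>x y. g (x + y) = g x + g y) \<longrightarrow>
            (\<forall>x y. g (x * y) = g x * g y) \<longrightarrow> (\<forall>c. Lm_elem p m c \<longrightarrow> g (\<phi> c) = \<psi> c) \<longrightarrow>
            (\<forall>a n. enat n \<le> m \<longrightarrow> g (Frob q a n) = Frob q (g \<circ> a) n))"
proof -
  note p = assms(1) and q = assms(3) and phi = assms(4)
  have q0: "q > 0" using q p prime_gt_0_nat by simp
  have okA: "opok (+)" and okM: "opok (*)" unfolding opok_def by simp_all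
  have gen: "Frob q (\<lambda>n. evalQ \<phi> ((THE Q. Qprop p q t op Q) n) a b) n =
      (\<lambda>n. evalQ \<phi> ((THE Q. Qprop p q (t + 1) op Q) n) (Frob q a) (Frob q b)) n"
    if op: "opok op" and nm: "enat n \<le> m" for op a b n
  proof -
    have T: "Qprop p q t op (THE Q. Qprop p q t op Q) \<and> (\<forall>i. Rg p i ((THE Q. Qprop p q t op Q) i))"
      by (rule Qthe[OF p q op])
    have L: "LXY_elem p ((THE Q. Qprop p q t op Q) n)" using T unfolding Qprop_def by blast
    have G: "Rg p n ((THE Q. Qprop p q t op Q) n)" using T by blast
    show ?thesis
      unfolding Q_shift[OF p q op] Frob_def
      using evalQ_sig[OF p q phi L G nm, of a b] by simp
  qed
  show ?thesis
  proof (intro conjI allI impI)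
    fix a b n assume "enat n \<le> m"
    then show "Frob q (W_add p q t \<phi> a b) n = W_add p q (t + 1) \<phi> (Frob q a) (Frob q b) n"
      using gen[OF okA] unfolding W_add_def Qadd_def by blast
  next
    fix a b n assume "enat n \<le> m"
    then show "Frob q (W_mul p q t \<phi> a b) n = W_mul p q (t + 1) \<phi> (Frob q a) (Frob q b) n"
      using gen[OF okM] unfolding W_mul_def Qmul_def by blast
  next
    fix n
    show "Frob q (W_one :: nat \<Rightarrow> 'k) n = W_one n"
      unfolding Frob_def W_one_def using q0 by (simp add: zero_power)
  next
    fix n
    show "Frob q (W_zero :: nat \<Rightarrow> 'k) n = W_zero n"
      unfolding Frob_def W_zero_def using q0 by (simp add: zero_power)
  next
    fix \<psi> :: "R \<Rightarrow> 'l::comm_ring_1" and g :: "'k \<Rightarrow> 'l" and a n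
    assume "g 1 = 1" "\<forall>x y. g (x * y) = g x * g y"
    then show "g (Frob q a n) = Frob q (g \<circ> a) n"
      unfolding Frob_def using hom_pow by auto
  qed
qed

end
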